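(* Let $\delta\neq0$ be real, let $T$ be the two-level system with Hamiltonian $H_T=\delta|1\rangle\langle1|$ and $|+\rangle_\delta=\frac1{\sqrt2}(|0\rangle+|1\rangle)$. Let $L$ be a positive integer, $K>L$ an integer, $T'$ the system with Hamiltonian $H_{T'}=\sum_{k=-K}^{K}k\delta|k\rangle\langle k|$, and $|\eta_L\rangle=\frac1{\sqrt L}\sum_{j=0}^{L-1}|j\rangle$ on $T'$. Then for every $\epsilon>0$ there exist an integer $m$ and a covariant operation $\Phi:T^{\otimes m}\to T'$ such that $\|\Phi(|+\rangle\langle+|_\delta^{\otimes m})-|\eta_L\rangle\langle\eta_L|\|_1\le\epsilon$.
   Context: A channel $\Phi:X\to X'$ is covariant if $\Phi(e^{-iH_Xt}\rho e^{iH_Xt})=e^{-iH_{X'}t}\Phi(\rho)e^{iH_{X'}t}$ for all $t\in\mathbb{R}$; Hamiltonians of composite systems are sums of local ones. *)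

theory Defs
  imports Complex_Main "Jordan_Normal_Form.Matrix"
begin

definition tr :: "complex mat \<Rightarrow> complex" where
  "tr A = (\<Sum>i<dim_row A. A $$ (i, i))"

definition adj :: "complex mat \<Rightarrow> complex mat" where
  "adj A = mat (dim_col A) (dim_row A) (\<lambda>(i, j). cnj (A $$ (j, i)))"

definition hermitian :: "complex mat \<Rightarrow> bool" where
  "hermitian A \<longleftrightarrow> A \<in> carrier_mat (dim_row A) (dim_row A) \<and> adj A = A"

definition psd :: "complex mat \<Rightarrow> bool" where
  "psd A \<longleftrightarrow> hermitian A \<and>
     (\<forall>v::complex vec. dim_vec v = dim_row A \<longrightarrow> Re (conjugate v \<bullet> (A *\<^sub>v v)) \<ge> 0)"

definition trace_norm :: "complex mat \<Rightarrow> real" where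
  "trace_norm A = Re (tr (THE S. psd S \<and> dim_row S = dim_col A \<and> S * S = adj A * A))"

definition kron :: "complex mat \<Rightarrow> complex mat \<Rightarrow> complex mat" where
  "kron A B = mat (dim_row A * dim_row B) (dim_col A * dim_col B)
     (\<lambda>(p, q). A $$ (p div dim_row B, q div dim_col B) * B $$ (p mod dim_row B, q mod dim_col B))"

fun tensor_pow :: "complex mat \<Rightarrow> nat \<Rightarrow> complex mat" where
  "tensor_pow A 0 = 1\<^sub>m 1"
| "tensor_pow A (Suc m) = kron (tensor_pow A m) A"

text \<open>Hamiltonian of the composite T^{\<otimes>m}: sum of local Hamiltonians,
  H_{m+1} = H_m \<otimes> I + I \<otimes> H.\<close>
fun ham_pow :: "complex mat \<Rightarrow> nat \<Rightarrow> complex mat" where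
  "ham_pow H 0 = 0\<^sub>m 1 1"
| "ham_pow H (Suc m) = kron (ham_pow H m) (1\<^sub>m (dim_row H)) + kron (1\<^sub>m (dim_row (ham_pow H m))) H"

text \<open>Time evolution e^{-iHt} for a diagonal Hamiltonian H (all Hamiltonians in this
  statement are diagonal in the chosen bases; the exponential of a diagonal matrix is
  the diagonal matrix of exponentials).\<close>
definition evol :: "complex mat \<Rightarrow> real \<Rightarrow> complex mat" where
  "evol H t = mat (dim_row H) (dim_row H)
     (\<lambda>(i, j). if i = j then exp (- \<i> * complex_of_real t * H $$ (i, i)) else 0)"

definition lin_map :: "nat \<Rightarrow> nat \<Rightarrow> (complex mat \<Rightarrow> complex mat) \<Rightarrow> bool" where
  "lin_map d d' \<Phi> \<longleftrightarrow>
     (\<forall>A \<in> carrier_mat d d. \<Phi> A \<in> carrier_mat d' d') \<and>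
     (\<forall>A \<in> carrier_mat d d. \<forall>B \<in> carrier_mat d d. \<Phi> (A + B) = \<Phi> A + \<Phi> B) \<and>
     (\<forall>A \<in> carrier_mat d d. \<forall>c. \<Phi> (c \<cdot>\<^sub>m A) = c \<cdot>\<^sub>m \<Phi> A)"

text \<open>(\<Phi> \<otimes> id_n) applied to a (d*n) x (d*n) matrix X, regarded as an n x n block matrix
  of d x d blocks (index a * d + i).\<close>
definition ampliate :: "nat \<Rightarrow> nat \<Rightarrow> nat \<Rightarrow> (complex mat \<Rightarrow> complex mat) \<Rightarrow> complex mat \<Rightarrow> complex mat" where
  "ampliate d d' n \<Phi> X = mat (n * d') (n * d')
     (\<lambda>(p, q). \<Phi> (mat d d (\<lambda>(i, j). X $$ ((p div d') * d + i, (q div d') * d + j)))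
                 $$ (p mod d', q mod d'))"

definition completely_positive :: "nat \<Rightarrow> nat \<Rightarrow> (complex mat \<Rightarrow> complex mat) \<Rightarrow> bool" where
  "completely_positive d d' \<Phi> \<longleftrightarrow>
     (\<forall>n X. n > 0 \<longrightarrow> X \<in> carrier_mat (n * d) (n * d) \<longrightarrow> psd X \<longrightarrow> psd (ampliate d d' n \<Phi> X))"

definition trace_preserving :: "nat \<Rightarrow> (complex mat \<Rightarrow> complex mat) \<Rightarrow> bool" where
  "trace_preserving d \<Phi> \<longleftrightarrow> (\<forall>A \<in> carrier_mat d d. tr (\<Phi> A) = tr A)"

definition channel :: "nat \<Rightarrow> nat \<Rightarrow> (complex mat \<Rightarrow> complex mat) \<Rightarrow> bool" where
  "channel d d' \<Phi> \<longleftrightarrow> lin_map d d' \<Phi> \<and> completely_positive d d' \<Phi> \<and> trace_preserving d \<Phi>"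

definition covariant_channel :: "complex mat \<Rightarrow> complex mat \<Rightarrow> (complex mat \<Rightarrow> complex mat) \<Rightarrow> bool" where
  "covariant_channel H H' \<Phi> \<longleftrightarrow> channel (dim_row H) (dim_row H') \<Phi> \<and>
     (\<forall>t::real. \<forall>\<rho> \<in> carrier_mat (dim_row H) (dim_row H).
        \<Phi> (evol H t * \<rho> * adj (evol H t)) = evol H' t * \<Phi> \<rho> * adj (evol H' t))"

definition proj :: "complex vec \<Rightarrow> complex mat" where
  "proj v = mat (dim_vec v) (dim_vec v) (\<lambda>(i, j). v $ i * cnj (v $ j))"

definition H_T :: "real \<Rightarrow> complex mat" where
  "H_T \<delta> = mat 2 2 (\<lambda>(i, j). if i = 1 \<and> j = 1 then complex_of_real \<delta> else 0)"

definition plus_state :: "complex vec" where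
  "plus_state = vec 2 (\<lambda>_. complex_of_real (1 / sqrt 2))"

text \<open>The system T': basis |k>, k = -K..K, stored at index k + K; H_T' = \<Sum> k \<delta> |k><k|.\<close>
definition H_T' :: "real \<Rightarrow> nat \<Rightarrow> complex mat" where
  "H_T' \<delta> K = mat (2 * K + 1) (2 * K + 1)
     (\<lambda>(i, j). if i = j then complex_of_real ((real i - real K) * \<delta>) else 0)"

text \<open>|\<eta>_L> = (1/sqrt L) \<Sum>_{j=0}^{L-1} |j> on T' (|j> at index j + K).\<close>
definition eta_state :: "nat \<Rightarrow> nat \<Rightarrow> complex vec" where
  "eta_state K L = vec (2 * K + 1)
     (\<lambda>i. if K \<le> i \<and> i < K + L then complex_of_real (1 / sqrt (real L)) else 0)"

end

theory Submission
  imports Defs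
begin


definition qf :: "nat \<Rightarrow> complex mat \<Rightarrow> (nat \<Rightarrow> complex) \<Rightarrow> complex" where
  "qf n A v = (\<Sum>i<n. \<Sum>j<n. cnj (v i) * A $$ (i,j) * v j)"

definition herm :: "nat \<Rightarrow> complex mat \<Rightarrow> bool" where
  "herm n A \<longleftrightarrow> (\<forall>i<n. \<forall>j<n. A $$ (j,i) = cnj (A $$ (i,j)))"

lemma herm_entry: "herm n A \<Longrightarrow> i < n \<Longrightarrow> j < n \<Longrightarrow> A $$ (j,i) = cnj (A $$ (i,j))"
  unfolding herm_def by blast

lemma quad_form_eq:
  assumes "A \<in> carrier_mat n n" "dim_vec v = n"
  shows "conjugate v \<bullet> (A *\<^sub>v v) = qf n A (\<lambda>i. v $ i)"
  unfolding qf_def scalar_prod_def using assms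
  by (auto simp: row_def scalar_prod_def sum_distrib_left mult.assoc atLeast0LessThan intro!: sum.cong)

lemma psd_iff:
  assumes "A \<in> carrier_mat n n"
  shows "psd A \<longleftrightarrow> herm n A \<and> (\<forall>v. 0 \<le> Re (qf n A v))"
proof -
  have h: "hermitian A \<longleftrightarrow> herm n A"
  proof
    assume "hermitian A"
    then have "adj A = A" by (simp add: hermitian_def)
    have hh: "A $$ (j,i) = cnj (A $$ (i,j))" if "i < n" "j < n" for i j
    proof -
      have "A $$ (j,i) = adj A $$ (j,i)" using \<open>adj A = A\<close> by simp
      also have "\<dots> = cnj (A $$ (i,j))" using that assms unfolding adj_def by simp
      finally show ?thesis .
    qed
    show "herm n A" unfolding herm_def by (intro allI impI hh)
  next
    assume hA: "herm n A"
    have "adj A = A"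
    proof (rule eq_matI)
      fix i j assume "i < dim_row A" "j < dim_col A"
      then have ij: "i < n" "j < n" using assms by auto
      have "adj A $$ (i,j) = cnj (A $$ (j,i))" using ij assms unfolding adj_def by simp
      also have "\<dots> = A $$ (i,j)" using herm_entry[OF hA ij(2) ij(1)] by simp
      finally show "adj A $$ (i,j) = A $$ (i,j)" .
    qed (use assms in \<open>auto simp: adj_def\<close>)
    then show "hermitian A" using assms by (simp add: hermitian_def)
  qed
  have q: "(\<forall>v::complex vec. dim_vec v = dim_row A \<longrightarrow> Re (conjugate v \<bullet> (A *\<^sub>v v)) \<ge> 0)
     \<longleftrightarrow> (\<forall>v. 0 \<le> Re (qf n A v))"
  proof
    assume H: "\<forall>v::complex vec. dim_vec v = dim_row A \<longrightarrow> Re (conjugate v \<bullet> (A *\<^sub>v v)) \<ge> 0"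
    show "\<forall>v. 0 \<le> Re (qf n A v)"
    proof
      fix v :: "nat \<Rightarrow> complex"
      have "qf n A v = qf n A (\<lambda>i. vec n v $ i)" unfolding qf_def by (intro sum.cong) auto
      also have "\<dots> = conjugate (vec n v) \<bullet> (A *\<^sub>v vec n v)" using quad_form_eq[OF assms] by simp
      finally show "0 \<le> Re (qf n A v)" using H assms by auto
    qed
  next
    assume "\<forall>v. 0 \<le> Re (qf n A v)"
    then show "\<forall>v::complex vec. dim_vec v = dim_row A \<longrightarrow> Re (conjugate v \<bullet> (A *\<^sub>v v)) \<ge> 0"
      using quad_form_eq[OF assms] assms by auto
  qed
  show ?thesis unfolding psd_def using h q by blast
qed

lemma qf_expand:
  fixes r :: real
  shows "qf n A (\<lambda>i. v i + of_real r * w i) = qf n A v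
     + of_real r * ((\<Sum>i<n. \<Sum>j<n. cnj (v i) * A $$ (i,j) * w j) + (\<Sum>i<n. \<Sum>j<n. cnj (w i) * A $$ (i,j) * v j))
     + of_real (r^2) * qf n A w"
proof -
  have t: "cnj (v i + of_real r * w i) * A $$ (i,j) * (v j + of_real r * w j) =
      cnj (v i) * A $$ (i,j) * v j + of_real r * (cnj (v i) * A $$ (i,j) * w j) + of_real r * (cnj (w i) * A $$ (i,j) * v j)
      + of_real (r^2) * (cnj (w i) * A $$ (i,j) * w j)" for i j
    by (simp add: algebra_simps power2_eq_square)
  show ?thesis unfolding qf_def t
    by (simp only: sum.distrib flip: sum_distrib_left) (simp only: distrib_left add.assoc)
qed

lemma psd_null:
  assumes H: "herm n A" and P: "\<forall>v. 0 \<le> Re (qf n A v)" and z: "Re (qf n A v) = 0"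
  shows "\<forall>i<n. (\<Sum>j<n. A $$ (i,j) * v j) = 0"
proof -
  define w where "w i = (\<Sum>j<n. A $$ (i,j) * v j)" for i
  define a where "a = (\<Sum>i<n. (cmod (w i))^2)"
  have X2: "(\<Sum>i<n. \<Sum>j<n. cnj (w i) * A $$ (i,j) * v j) = of_real a"
  proof -
    have "(\<Sum>i<n. \<Sum>j<n. cnj (w i) * A $$ (i,j) * v j) = (\<Sum>i<n. cnj (w i) * w i)"
      by (simp add: w_def sum_distrib_left mult.assoc)
    also have "\<dots> = of_real a" unfolding a_def of_real_sum
      by (intro sum.cong refl) (simp add: complex_norm_square mult.commute del: of_real_power)
    finally show ?thesis .
  qed
  have X1: "(\<Sum>i<n. \<Sum>j<n. cnj (v i) * A $$ (i,j) * w j) = of_real a"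
  proof -
    have "(\<Sum>i<n. \<Sum>j<n. cnj (v i) * A $$ (i,j) * w j) = (\<Sum>j<n. (\<Sum>i<n. cnj (v i) * A $$ (i,j)) * w j)"
      by (subst sum.swap) (simp add: sum_distrib_right)
    also have "\<dots> = (\<Sum>j<n. cnj (w j) * w j)"
    proof (intro sum.cong refl)
      fix j assume j: "j \<in> {..<n}"
      have "(\<Sum>i<n. cnj (v i) * A $$ (i,j)) = (\<Sum>i<n. cnj (A $$ (j,i) * v i))"
      proof (intro sum.cong refl)
        fix i assume i: "i \<in> {..<n}"
        have "A $$ (i,j) = cnj (A $$ (j,i))" using herm_entry[OF H, of j i] i j by blast
        then show "cnj (v i) * A $$ (i,j) = cnj (A $$ (j,i) * v i)" by (simp add: mult.commute)
      qed
      also have "\<dots> = cnj (w j)" by (simp add: w_def)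
      finally show "(\<Sum>i<n. cnj (v i) * A $$ (i,j)) * w j = cnj (w j) * w j" by simp
    qed
    also have "\<dots> = of_real a" unfolding a_def of_real_sum
      by (intro sum.cong refl) (simp add: complex_norm_square mult.commute del: of_real_power)
    finally show ?thesis .
  qed
  define c where "c = Re (qf n A w)"
  have c0: "c \<ge> 0" using P c_def by auto
  have key: "0 \<le> 2 * r * a + r^2 * c" for r :: real
  proof -
    have "0 \<le> Re (qf n A (\<lambda>i. v i + of_real r * w i))" using P by auto
    also have "\<dots> = 2 * r * a + r^2 * c"
      unfolding qf_expand X1 X2 c_def using z by simp
    finally show ?thesis .
  qed
  have a0: "a = 0"
  proof (rule ccontr)
    assume "a \<noteq> 0"
    moreover have "a \<ge> 0" unfolding a_def by (simp add: sum_nonneg)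
    ultimately have ap: "a > 0" by simp
    define r where "r = - a / (c + 1)"
    have cp: "c + 1 > 0" using c0 by simp
    have rn: "r < 0" unfolding r_def using ap cp by simp
    have "a * c / (c + 1) \<le> a" using cp ap by (simp add: divide_le_eq)
    then have "r * c \<ge> - a" unfolding r_def by simp
    then have "2 * a + r * c > 0" using ap by simp
    then have "r * (2 * a + r * c) < 0" using rn by (simp add: mult_neg_pos)
    moreover have "0 \<le> r * (2 * a + r * c)" using key[of r] by (simp add: algebra_simps power2_eq_square)
    ultimately show False by simp
  qed
  have "\<forall>i\<in>{..<n}. (cmod (w i))^2 = 0"
    using a0 unfolding a_def by (simp add: sum_nonneg_eq_0_iff)
  then have "\<forall>i<n. w i = 0" by simp
  then show ?thesis by (simp add: w_def)
qed


lemma mult_entry: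
  assumes "A \<in> carrier_mat n m" "B \<in> carrier_mat m p" "i < n" "j < p"
  shows "(A * B) $$ (i,j) = (\<Sum>k<m. A $$ (i,k) * B $$ (k,j))"
  using assms by (simp add: scalar_prod_def atLeast0LessThan)

lemma sum3_rot:
  "(\<Sum>c<n. \<Sum>a<n. \<Sum>b<n. F a b c) = (\<Sum>a<(n::nat). \<Sum>b<n. \<Sum>c<n. F a b c)"
proof -
  have "(\<Sum>c<n. \<Sum>a<n. \<Sum>b<n. F a b c) = (\<Sum>a<n. \<Sum>c<n. \<Sum>b<n. F a b c)" by (rule sum.swap)
  also have "\<dots> = (\<Sum>a<n. \<Sum>b<n. \<Sum>c<n. F a b c)" by (rule sum.cong[OF refl]) (rule sum.swap)
  finally show ?thesis .
qed

lemma psd_sqrt_unique: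
  assumes S: "S \<in> carrier_mat n n" and R: "R \<in> carrier_mat n n"
    and pS: "psd S" and pR: "psd R" and SR: "S * S = R * R"
  shows "S = R"
proof -
  have hS: "herm n S" and qS: "\<forall>v. 0 \<le> Re (qf n S v)" using pS psd_iff[OF S] by auto
  have hR: "herm n R" and qR: "\<forall>v. 0 \<le> Re (qf n R v)" using pR psd_iff[OF R] by auto
  have sq: "(\<Sum>k<n. S $$ (i,k) * S $$ (k,j)) = (\<Sum>k<n. R $$ (i,k) * R $$ (k,j))" if "i < n" "j < n" for i j
    using arg_cong[OF SR, of "\<lambda>M. M $$ (i,j)"] mult_entry[OF S S that] mult_entry[OF R R that] by simp
  define X where "X i j = S $$ (i,j) - R $$ (i,j)" for i j
  have hX: "X j i = cnj (X i j)" if "i < n" "j < n" for i j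
    unfolding X_def using herm_entry[OF hS that] herm_entry[OF hR that] by simp
  have hX': "cnj (X k i) = X i k" if "i < n" "k < n" for i k
    using hX[OF that(2) that(1)] by simp
  have SXR: "(\<Sum>l<n. S $$ (k,l) * X l i) = - (\<Sum>l<n. X k l * R $$ (l,i))" if "k < n" "i < n" for k i
  proof -
    have "(\<Sum>l<n. S $$ (k,l) * X l i) + (\<Sum>l<n. X k l * R $$ (l,i))
        = (\<Sum>l<n. S $$ (k,l) * S $$ (l,i) - R $$ (k,l) * R $$ (l,i))"
      unfolding sum.distrib[symmetric] X_def by (intro sum.cong refl) (simp add: algebra_simps)
    also have "\<dots> = 0" using sq[OF that] by (simp add: sum_subtractf)
    finally show ?thesis by (simp only: eq_neg_iff_add_eq_0)
  qed
  define T1 where "T1 = (\<Sum>i<n. qf n S (\<lambda>k. X k i))"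
  define T2 where "T2 = (\<Sum>i<n. qf n R (\<lambda>k. X k i))"
  have T1e: "T1 = - (\<Sum>i<n. \<Sum>k<n. \<Sum>l<n. X i k * X k l * R $$ (l,i))"
  proof -
    have "T1 = (\<Sum>i<n. \<Sum>k<n. X i k * (\<Sum>l<n. S $$ (k,l) * X l i))"
      unfolding T1_def qf_def
      by (intro sum.cong refl) (simp add: sum_distrib_left mult.assoc hX')
    also have "\<dots> = (\<Sum>i<n. \<Sum>k<n. - (X i k * (\<Sum>l<n. X k l * R $$ (l,i))))"
      by (intro sum.cong refl) (simp add: SXR)
    also have "\<dots> = - (\<Sum>i<n. \<Sum>k<n. \<Sum>l<n. X i k * X k l * R $$ (l,i))"
      by (simp add: sum_negf sum_distrib_left mult.assoc)
    finally show ?thesis .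
  qed
  have T2e: "T2 = (\<Sum>i<n. \<Sum>k<n. \<Sum>l<n. X i k * R $$ (k,l) * X l i)"
    unfolding T2_def qf_def by (intro sum.cong refl) (simp add: hX')
  have "(\<Sum>i<n. \<Sum>k<n. \<Sum>l<n. X i k * X k l * R $$ (l,i)) = (\<Sum>i<n. \<Sum>k<n. \<Sum>l<n. X i k * R $$ (k,l) * X l i)"
    using sum3_rot[of "\<lambda>a b c. X a b * R $$ (b,c) * X c a" n]
    by (simp add: mult.commute mult.left_commute)
  then have T12: "Re T1 + Re T2 = 0" using T1e T2e by simp
  have n1: "\<forall>i\<in>{..<n}. 0 \<le> Re (qf n S (\<lambda>k. X k i))" using qS by auto
  have n2: "\<forall>i\<in>{..<n}. 0 \<le> Re (qf n R (\<lambda>k. X k i))" using qR by auto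
  have r1: "Re T1 \<ge> 0" unfolding T1_def Re_sum using n1 by (intro sum_nonneg) auto
  have r2: "Re T2 \<ge> 0" unfolding T2_def Re_sum using n2 by (intro sum_nonneg) auto
  have z1: "Re T1 = 0" and z2: "Re T2 = 0" using T12 r1 r2 by auto
  have e1: "\<forall>i\<in>{..<n}. Re (qf n S (\<lambda>k. X k i)) = 0"
    using z1 n1 sum_nonneg_eq_0_iff[of "{..<n}" "\<lambda>i. Re (qf n S (\<lambda>k. X k i))"] unfolding T1_def Re_sum by auto
  have e2: "\<forall>i\<in>{..<n}. Re (qf n R (\<lambda>k. X k i)) = 0"
    using z2 n2 sum_nonneg_eq_0_iff[of "{..<n}" "\<lambda>i. Re (qf n R (\<lambda>k. X k i))"] unfolding T2_def Re_sum by auto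
  have XX: "X k l = 0" if "k < n" "l < n" for k l
  proof -
    have a: "(\<Sum>j<n. S $$ (k,j) * X j k) = 0" using psd_null[OF hS qS, of "\<lambda>j. X j k"] e1 that by auto
    have b: "(\<Sum>j<n. R $$ (k,j) * X j k) = 0" using psd_null[OF hR qR, of "\<lambda>j. X j k"] e2 that by auto
    have "(\<Sum>j<n. X k j * X j k) = (\<Sum>j<n. S $$ (k,j) * X j k) - (\<Sum>j<n. R $$ (k,j) * X j k)"
      unfolding sum_subtractf[symmetric] by (intro sum.cong refl) (simp add: X_def algebra_simps)
    then have "(\<Sum>j<n. X k j * X j k) = 0" using a b by simp
    moreover have "(\<Sum>j<n. X k j * X j k) = of_real (\<Sum>j<n. (cmod (X k j))^2)"
      unfolding of_real_sum
    proof (intro sum.cong refl)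
      fix j assume "j \<in> {..<n}"
      then have "X j k = cnj (X k j)" using hX[of k j] that by simp
      then show "X k j * X j k = of_real ((cmod (X k j))^2)" by (simp add: complex_norm_square del: of_real_power)
    qed
    ultimately have "complex_of_real (\<Sum>j<n. (cmod (X k j))^2) = 0" by metis
    then have "(\<Sum>j<n. (cmod (X k j))^2) = 0" by (simp only: of_real_eq_0_iff)
    then have "\<forall>j\<in>{..<n}. (cmod (X k j))^2 = 0" by (simp add: sum_nonneg_eq_0_iff)
    then show ?thesis using that by simp
  qed
  show ?thesis
  proof (rule eq_matI)
    fix i j assume "i < dim_row R" "j < dim_col R"
    then show "S $$ (i,j) = R $$ (i,j)" using XX[of i j] R unfolding X_def by simp
  qed (use S R in auto)
qed

lemma trace_norm_eqI:
  assumes A: "A \<in> carrier_mat n n" and S: "S \<in> carrier_mat n n" and pS: "psd S"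
    and SS: "S * S = adj A * A"
  shows "trace_norm A = Re (tr S)"
proof -
  have "(THE S'. psd S' \<and> dim_row S' = dim_col A \<and> S' * S' = adj A * A) = S"
  proof (rule the_equality)
    show "psd S \<and> dim_row S = dim_col A \<and> S * S = adj A * A" using pS S A SS by simp
  next
    fix S' assume H: "psd S' \<and> dim_row S' = dim_col A \<and> S' * S' = adj A * A"
    then have "S' \<in> carrier_mat n n" using A unfolding psd_def hermitian_def by auto
    then show "S' = S" using psd_sqrt_unique[OF _ S, of S'] H pS SS by auto
  qed
  then show ?thesis unfolding trace_norm_def by simp
qed

definition skraus :: "nat \<Rightarrow> 'j set \<Rightarrow> ('j \<Rightarrow> nat \<Rightarrow> nat) \<Rightarrow> ('j \<Rightarrow> nat \<Rightarrow> complex) \<Rightarrow> complex mat \<Rightarrow> complex mat" where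
  "skraus n' J g c X = mat n' n' (\<lambda>(a,b). \<Sum>j\<in>J. c j a * cnj (c j b) * X $$ (g j a, g j b))"

lemma skraus_carrier[simp]: "skraus n' J g c X \<in> carrier_mat n' n'"
  by (simp add: skraus_def)

lemma skraus_dim[simp]: "dim_row (skraus n' J g c X) = n'" "dim_col (skraus n' J g c X) = n'"
  by (simp_all add: skraus_def)

lemma skraus_entry:
  "a < n' \<Longrightarrow> b < n' \<Longrightarrow> skraus n' J g c X $$ (a,b) = (\<Sum>j\<in>J. c j a * cnj (c j b) * X $$ (g j a, g j b))"
  by (simp add: skraus_def)

lemma skraus_lin:
  assumes gb: "\<forall>j\<in>J. \<forall>a<n'. g j a < d"
  shows "lin_map d n' (skraus n' J g c)"
  unfolding lin_map_def
proof (intro conjI ballI allI)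
  fix A B :: "complex mat" assume A: "A \<in> carrier_mat d d" and B: "B \<in> carrier_mat d d"
  show "skraus n' J g c (A + B) = skraus n' J g c A + skraus n' J g c B"
  proof (rule eq_matI)
    fix a b assume "a < dim_row (skraus n' J g c A + skraus n' J g c B)" "b < dim_col (skraus n' J g c A + skraus n' J g c B)"
    then have ab: "a < n'" "b < n'" by auto
    have "skraus n' J g c (A + B) $$ (a,b) = (\<Sum>j\<in>J. c j a * cnj (c j b) * A $$ (g j a, g j b) + c j a * cnj (c j b) * B $$ (g j a, g j b))"
      unfolding skraus_entry[OF ab]
    proof (intro sum.cong refl)
      fix j assume "j \<in> J"
      then have "g j a < d" "g j b < d" using gb ab by auto
      then show "c j a * cnj (c j b) * (A + B) $$ (g j a, g j b) = c j a * cnj (c j b) * A $$ (g j a, g j b) + c j a * cnj (c j b) * B $$ (g j a, g j b)"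
        using A B by (simp add: algebra_simps)
    qed
    also have "\<dots> = (skraus n' J g c A + skraus n' J g c B) $$ (a,b)"
      using ab by (simp add: skraus_entry sum.distrib)
    finally show "skraus n' J g c (A + B) $$ (a,b) = (skraus n' J g c A + skraus n' J g c B) $$ (a,b)" .
  qed auto
next
  fix A :: "complex mat" and z :: complex assume A: "A \<in> carrier_mat d d"
  show "skraus n' J g c (z \<cdot>\<^sub>m A) = z \<cdot>\<^sub>m skraus n' J g c A"
  proof (rule eq_matI)
    fix a b assume "a < dim_row (z \<cdot>\<^sub>m skraus n' J g c A)" "b < dim_col (z \<cdot>\<^sub>m skraus n' J g c A)"
    then have ab: "a < n'" "b < n'" by auto
    have "skraus n' J g c (z \<cdot>\<^sub>m A) $$ (a,b) = (\<Sum>j\<in>J. z * (c j a * cnj (c j b) * A $$ (g j a, g j b)))"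
      unfolding skraus_entry[OF ab]
    proof (intro sum.cong refl)
      fix j assume "j \<in> J"
      then have "g j a < d" "g j b < d" using gb ab by auto
      then show "c j a * cnj (c j b) * (z \<cdot>\<^sub>m A) $$ (g j a, g j b) = z * (c j a * cnj (c j b) * A $$ (g j a, g j b))"
        using A by (simp add: algebra_simps)
    qed
    also have "\<dots> = (z \<cdot>\<^sub>m skraus n' J g c A) $$ (a,b)"
      using ab by (simp add: skraus_entry sum_distrib_left)
    finally show "skraus n' J g c (z \<cdot>\<^sub>m A) $$ (a,b) = (z \<cdot>\<^sub>m skraus n' J g c A) $$ (a,b)" .
  qed auto
qed simp

lemma skraus_tp:
  assumes fin: "finite J" and gb: "\<forall>j\<in>J. \<forall>a<n'. g j a < d"
    and comp: "\<forall>x<d. (\<Sum>j\<in>J. \<Sum>a<n'. if g j a = x then c j a * cnj (c j a) else 0) = 1"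
  shows "trace_preserving d (skraus n' J g c)"
  unfolding trace_preserving_def
proof
  fix A :: "complex mat" assume A: "A \<in> carrier_mat d d"
  have "tr A = (\<Sum>x<d. A $$ (x,x) * (\<Sum>j\<in>J. \<Sum>a<n'. if g j a = x then c j a * cnj (c j a) else 0))"
    using A comp by (simp add: tr_def)
  also have "\<dots> = (\<Sum>x<d. \<Sum>j\<in>J. \<Sum>a<n'. if g j a = x then c j a * cnj (c j a) * A $$ (g j a, g j a) else 0)"
    by (intro sum.cong refl) (simp add: sum_distrib_left if_distrib mult.commute cong: if_cong)
  also have "\<dots> = (\<Sum>j\<in>J. \<Sum>x<d. \<Sum>a<n'. if g j a = x then c j a * cnj (c j a) * A $$ (g j a, g j a) else 0)"
    by (rule sum.swap)
  also have "\<dots> = (\<Sum>j\<in>J. \<Sum>a<n'. \<Sum>x<d. if g j a = x then c j a * cnj (c j a) * A $$ (g j a, g j a) else 0)"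
    by (rule sum.cong[OF refl]) (rule sum.swap)
  also have "\<dots> = (\<Sum>j\<in>J. \<Sum>a<n'. c j a * cnj (c j a) * A $$ (g j a, g j a))"
    using gb by (intro sum.cong refl) (simp add: sum.delta')
  also have "\<dots> = (\<Sum>a<n'. \<Sum>j\<in>J. c j a * cnj (c j a) * A $$ (g j a, g j a))"
    by (rule sum.swap)
  also have "\<dots> = tr (skraus n' J g c A)"
    by (simp add: tr_def skraus_entry)
  finally show "tr (skraus n' J g c A) = tr A" by simp
qed

lemma collapse_sum:
  fixes N P :: nat and a :: "nat \<Rightarrow> complex"
  assumes "\<forall>q<P. f q < N"
  shows "(\<Sum>s<N. (\<Sum>q<P. if f q = s then a q else 0) * h s) = (\<Sum>q<P. a q * h (f q))"
proof -
  have "(\<Sum>s<N. (\<Sum>q<P. if f q = s then a q else 0) * h s) = (\<Sum>s<N. \<Sum>q<P. if f q = s then a q * h s else 0)"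
    unfolding sum_distrib_right by (intro sum.cong refl) simp
  also have "\<dots> = (\<Sum>q<P. \<Sum>s<N. if f q = s then a q * h s else 0)" by (rule sum.swap)
  also have "\<dots> = (\<Sum>q<P. a q * h (f q))" using assms by (intro sum.cong refl) (simp add: sum.delta')
  finally show ?thesis .
qed

lemma qf_pullback:
  fixes N P :: nat and a :: "nat \<Rightarrow> complex"
  assumes fb: "\<forall>p<P. f p < N"
  shows "qf N X (\<lambda>r. \<Sum>p<P. if f p = r then a p else 0) = (\<Sum>p<P. \<Sum>q<P. cnj (a p) * X $$ (f p, f q) * a q)"
proof -
  have inner: "(\<Sum>s<N. X $$ (r,s) * (\<Sum>q<P. if f q = s then a q else 0)) = (\<Sum>q<P. X $$ (r, f q) * a q)" for r
    using collapse_sum[OF fb, of a "\<lambda>s. X $$ (r,s)"] by (simp add: mult.commute)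
  have "qf N X (\<lambda>r. \<Sum>p<P. if f p = r then a p else 0) =
      (\<Sum>r<N. (\<Sum>p<P. if f p = r then cnj (a p) else 0) * (\<Sum>q<P. X $$ (r, f q) * a q))"
    unfolding qf_def
  proof (intro sum.cong refl)
    fix r assume "r \<in> {..<N}"
    have "(\<Sum>s<N. cnj (\<Sum>p<P. if f p = r then a p else 0) * X $$ (r,s) * (\<Sum>q<P. if f q = s then a q else 0))
       = cnj (\<Sum>p<P. if f p = r then a p else 0) * (\<Sum>s<N. X $$ (r,s) * (\<Sum>q<P. if f q = s then a q else 0))"
      by (simp add: sum_distrib_left mult.assoc)
    also have "\<dots> = (\<Sum>p<P. if f p = r then cnj (a p) else 0) * (\<Sum>q<P. X $$ (r, f q) * a q)"
      unfolding inner by (simp add: cnj_sum if_distrib cong: if_cong)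
    finally show "(\<Sum>s<N. cnj (\<Sum>p<P. if f p = r then a p else 0) * X $$ (r,s) * (\<Sum>q<P. if f q = s then a q else 0))
       = (\<Sum>p<P. if f p = r then cnj (a p) else 0) * (\<Sum>q<P. X $$ (r, f q) * a q)" .
  qed
  also have "\<dots> = (\<Sum>p<P. cnj (a p) * (\<Sum>q<P. X $$ (f p, f q) * a q))"
    by (rule collapse_sum[OF fb])
  also have "\<dots> = (\<Sum>p<P. \<Sum>q<P. cnj (a p) * X $$ (f p, f q) * a q)"
    by (simp add: sum_distrib_left mult.assoc)
  finally show ?thesis .
qed


lemma skraus_cp:
  assumes gb: "\<forall>j\<in>J. \<forall>a<n'. g j a < d"
  shows "completely_positive d n' (skraus n' J g c)"
  unfolding completely_positive_def
proof (intro allI impI)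
  fix n X assume n: "n > 0" and X: "X \<in> carrier_mat (n * d) (n * d)" and pX: "psd X"
  have hX: "herm (n*d) X" and qX: "\<forall>v. 0 \<le> Re (qf (n*d) X v)" using pX psd_iff[OF X] by auto
  define M where "M = ampliate d n' n (skraus n' J g c) X"
  define idx where "idx j p = (p div n') * d + g j (p mod n')" for j p
  have Mc: "M \<in> carrier_mat (n*n') (n*n')" unfolding M_def ampliate_def by simp
  have idxb: "idx j p < n * d" if "j \<in> J" "p < n * n'" for j p
  proof -
    have np: "n' > 0" using that by (cases "n' = 0") auto
    have "p div n' < n" using that(2) less_mult_imp_div_less[of p n n'] by simp
    then have "p div n' + 1 \<le> n" by simp
    then have "(p div n' + 1) * d \<le> n * d" by (rule mult_right_mono) simp
    moreover have "g j (p mod n') < d" using gb that np by simp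
    ultimately show ?thesis unfolding idx_def by (simp add: algebra_simps)
  qed
  have Me: "M $$ (p,q) = (\<Sum>j\<in>J. c j (p mod n') * cnj (c j (q mod n')) * X $$ (idx j p, idx j q))"
    if "p < n*n'" "q < n*n'" for p q
  proof -
    have np: "n' > 0" using that by (cases "n' = 0") auto
    have pm: "p mod n' < n'" "q mod n' < n'" using np by auto
    show ?thesis unfolding M_def ampliate_def idx_def using that pm gb
      by (simp add: skraus_entry)
  qed
  have hM: "herm (n*n') M" unfolding herm_def
  proof (intro allI impI)
    fix p q assume pq: "p < n*n'" "q < n*n'"
    have "M $$ (q,p) = (\<Sum>j\<in>J. cnj (c j (p mod n') * cnj (c j (q mod n')) * X $$ (idx j p, idx j q)))"
      unfolding Me[OF pq(2) pq(1)]
    proof (intro sum.cong refl)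
      fix j assume j: "j \<in> J"
      have "X $$ (idx j q, idx j p) = cnj (X $$ (idx j p, idx j q))"
        using herm_entry[OF hX idxb[OF j pq(1)] idxb[OF j pq(2)]] .
      then show "c j (q mod n') * cnj (c j (p mod n')) * X $$ (idx j q, idx j p) = cnj (c j (p mod n') * cnj (c j (q mod n')) * X $$ (idx j p, idx j q))"
        by simp
    qed
    also have "\<dots> = cnj (M $$ (p,q))" unfolding Me[OF pq] by (simp add: cnj_sum)
    finally show "M $$ (q,p) = cnj (M $$ (p,q))" .
  qed
  have qM: "0 \<le> Re (qf (n*n') M w)" for w
  proof -
    define u where "u j r = (\<Sum>q<n*n'. if idx j q = r then cnj (c j (q mod n')) * w q else 0)" for j r
    have "qf (n*n') M w = (\<Sum>p<n*n'. \<Sum>q<n*n'. \<Sum>j\<in>J. cnj (w p) * (c j (p mod n') * cnj (c j (q mod n')) * X $$ (idx j p, idx j q)) * w q)"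
      unfolding qf_def by (intro sum.cong refl) (simp add: Me sum_distrib_left sum_distrib_right)
    also have "\<dots> = (\<Sum>p<n*n'. \<Sum>j\<in>J. \<Sum>q<n*n'. cnj (w p) * (c j (p mod n') * cnj (c j (q mod n')) * X $$ (idx j p, idx j q)) * w q)"
      by (rule sum.cong[OF refl]) (rule sum.swap)
    also have "\<dots> = (\<Sum>j\<in>J. \<Sum>p<n*n'. \<Sum>q<n*n'. cnj (w p) * (c j (p mod n') * cnj (c j (q mod n')) * X $$ (idx j p, idx j q)) * w q)"
      by (rule sum.swap)
    also have "\<dots> = (\<Sum>j\<in>J. qf (n*d) X (u j))"
    proof (intro sum.cong refl)
      fix j assume j: "j \<in> J"
      have fb: "\<forall>p<n*n'. idx j p < n*d" using idxb[OF j] by auto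
      show "(\<Sum>p<n*n'. \<Sum>q<n*n'. cnj (w p) * (c j (p mod n') * cnj (c j (q mod n')) * X $$ (idx j p, idx j q)) * w q) = qf (n*d) X (u j)"
        unfolding u_def qf_pullback[OF fb]
        by (intro sum.cong refl) (simp add: algebra_simps)
    qed
    finally have "Re (qf (n*n') M w) = (\<Sum>j\<in>J. Re (qf (n*d) X (u j)))" by simp
    also have "\<dots> \<ge> 0" using qX by (intro sum_nonneg) auto
    finally show ?thesis .
  qed
  show "psd (ampliate d n' n (skraus n' J g c) X)"
    using psd_iff[OF Mc] hM qM unfolding M_def by auto
qed

lemma evol_entry:
  assumes "dim_row H = d" "i < d" "j < d"
  shows "evol H t $$ (i,j) = (if i = j then exp (- \<i> * complex_of_real t * H $$ (i, i)) else 0)"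
  using assms by (simp add: evol_def)

lemma evol_conj_entry:
  assumes dH: "dim_row H = d" and rho: "\<rho> \<in> carrier_mat d d" and ij: "i < d" "j < d"
  shows "(evol H t * \<rho> * adj (evol H t)) $$ (i,j) =
     exp (- \<i> * complex_of_real t * H $$ (i, i)) * \<rho> $$ (i,j) * cnj (exp (- \<i> * complex_of_real t * H $$ (j, j)))"
proof -
  have U: "evol H t \<in> carrier_mat d d" using dH by (simp add: evol_def)
  have Ua: "adj (evol H t) \<in> carrier_mat d d" using U by (simp add: adj_def)
  have Ur: "evol H t * \<rho> \<in> carrier_mat d d" using U rho by simp
  have e1: "(evol H t * \<rho>) $$ (k,j) = exp (- \<i> * complex_of_real t * H $$ (k, k)) * \<rho> $$ (k,j)" if "k < d" for k
  proof -
    have "(evol H t * \<rho>) $$ (k,j) = (\<Sum>l<d. evol H t $$ (k,l) * \<rho> $$ (l,j))"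
      using mult_entry[OF U rho that ij(2)] .
    also have "\<dots> = (\<Sum>l<d. if l = k then exp (- \<i> * complex_of_real t * H $$ (k, k)) * \<rho> $$ (k,j) else 0)"
      using that dH by (intro sum.cong refl) (auto simp: evol_entry)
    also have "\<dots> = exp (- \<i> * complex_of_real t * H $$ (k, k)) * \<rho> $$ (k,j)"
      using that by simp
    finally show ?thesis .
  qed
  have "(evol H t * \<rho> * adj (evol H t)) $$ (i,j) = (\<Sum>k<d. (evol H t * \<rho>) $$ (i,k) * adj (evol H t) $$ (k,j))"
    using mult_entry[OF Ur Ua ij] .
  also have "\<dots> = (\<Sum>k<d. (evol H t * \<rho>) $$ (i,k) * (if k = j then cnj (exp (- \<i> * complex_of_real t * H $$ (j, j))) else 0))"
    using U ij dH by (intro sum.cong refl) (auto simp: adj_def evol_entry)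
  also have "\<dots> = (\<Sum>k<d. if k = j then (evol H t * \<rho>) $$ (i,j) * cnj (exp (- \<i> * complex_of_real t * H $$ (j, j))) else 0)"
    by (intro sum.cong refl) auto
  also have "\<dots> = (evol H t * \<rho>) $$ (i,j) * cnj (exp (- \<i> * complex_of_real t * H $$ (j, j)))"
    using ij by simp
  also have "\<dots> = exp (- \<i> * complex_of_real t * H $$ (i, i)) * \<rho> $$ (i,j) * cnj (exp (- \<i> * complex_of_real t * H $$ (j, j)))"
    using e1[OF ij(1)] by simp
  finally show ?thesis .
qed

lemma phase_eq:
  fixes t x y :: real
  shows "exp (- \<i> * complex_of_real t * complex_of_real x) * cnj (exp (- \<i> * complex_of_real t * complex_of_real y))
       = exp (- \<i> * complex_of_real t * complex_of_real (x - y))"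
proof -
  have e: "exp (- \<i> * complex_of_real t * complex_of_real z) = cis (- (t * z))" for z
    by (simp add: cis_conv_exp algebra_simps)
  show ?thesis unfolding e by (simp add: cis_cnj cis_mult algebra_simps)
qed

lemma skraus_cov:
  assumes gb: "\<forall>j\<in>J. \<forall>a<n'. g j a < d"
    and dH: "dim_row H = d" and dH': "dim_row H' = n'"
    and EH: "\<forall>x<d. H $$ (x,x) = complex_of_real (E x)"
    and EH': "\<forall>a<n'. H' $$ (a,a) = complex_of_real (E' a)"
    and cov: "\<forall>j\<in>J. \<forall>a<n'. \<forall>b<n'. c j a \<noteq> 0 \<longrightarrow> c j b \<noteq> 0 \<longrightarrow> E (g j a) - E (g j b) = E' a - E' b"
  shows "\<forall>t::real. \<forall>\<rho> \<in> carrier_mat d d.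
     skraus n' J g c (evol H t * \<rho> * adj (evol H t)) = evol H' t * skraus n' J g c \<rho> * adj (evol H' t)"
proof (intro allI ballI)
  fix t :: real and \<rho> :: "complex mat" assume rho: "\<rho> \<in> carrier_mat d d"
  define ph where "ph x = exp (- \<i> * complex_of_real t * complex_of_real x)" for x
  show "skraus n' J g c (evol H t * \<rho> * adj (evol H t)) = evol H' t * skraus n' J g c \<rho> * adj (evol H' t)"
  proof (rule eq_matI)
    have U': "evol H' t \<in> carrier_mat n' n'" using dH' by (simp add: evol_def)
    fix a b assume "a < dim_row (evol H' t * skraus n' J g c \<rho> * adj (evol H' t))"
      "b < dim_col (evol H' t * skraus n' J g c \<rho> * adj (evol H' t))"
    then have ab: "a < n'" "b < n'" using U' by (auto simp: adj_def)
    have "skraus n' J g c (evol H t * \<rho> * adj (evol H t)) $$ (a,b)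
       = (\<Sum>j\<in>J. c j a * cnj (c j b) * (ph (E (g j a)) * \<rho> $$ (g j a, g j b) * cnj (ph (E (g j b)))))"
      unfolding skraus_entry[OF ab]
    proof (intro sum.cong refl)
      fix j assume j: "j \<in> J"
      have gg: "g j a < d" "g j b < d" using gb j ab by auto
      show "c j a * cnj (c j b) * (evol H t * \<rho> * adj (evol H t)) $$ (g j a, g j b) =
         c j a * cnj (c j b) * (ph (E (g j a)) * \<rho> $$ (g j a, g j b) * cnj (ph (E (g j b))))"
        using evol_conj_entry[OF dH rho gg] EH gg unfolding ph_def by simp
    qed
    also have "\<dots> = (\<Sum>j\<in>J. ph (E' a) * (c j a * cnj (c j b) * \<rho> $$ (g j a, g j b)) * cnj (ph (E' b)))"
    proof (intro sum.cong refl)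
      fix j assume j: "j \<in> J"
      show "c j a * cnj (c j b) * (ph (E (g j a)) * \<rho> $$ (g j a, g j b) * cnj (ph (E (g j b)))) =
        ph (E' a) * (c j a * cnj (c j b) * \<rho> $$ (g j a, g j b)) * cnj (ph (E' b))"
      proof (cases "c j a = 0 \<or> c j b = 0")
        case True then show ?thesis by auto
      next
        case False
        then have "E (g j a) - E (g j b) = E' a - E' b" using cov j ab by auto
        then have "ph (E (g j a)) * cnj (ph (E (g j b))) = ph (E' a) * cnj (ph (E' b))"
          unfolding ph_def phase_eq by simp
        then show ?thesis by (simp add: algebra_simps)
      qed
    qed
    also have "\<dots> = ph (E' a) * skraus n' J g c \<rho> $$ (a,b) * cnj (ph (E' b))"
      by (simp add: skraus_entry[OF ab] sum_distrib_left sum_distrib_right)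
    also have "\<dots> = (evol H' t * skraus n' J g c \<rho> * adj (evol H' t)) $$ (a,b)"
      using evol_conj_entry[OF dH' skraus_carrier ab, of t J g c \<rho>] EH' ab unfolding ph_def by simp
    finally show "skraus n' J g c (evol H t * \<rho> * adj (evol H t)) $$ (a,b) = (evol H' t * skraus n' J g c \<rho> * adj (evol H' t)) $$ (a,b)" .
  next
    show "dim_row (skraus n' J g c (evol H t * \<rho> * adj (evol H t))) = dim_row (evol H' t * skraus n' J g c \<rho> * adj (evol H' t))"
      using dH' by (simp add: evol_def)
    show "dim_col (skraus n' J g c (evol H t * \<rho> * adj (evol H t))) = dim_col (evol H' t * skraus n' J g c \<rho> * adj (evol H' t))"
      using dH' by (simp add: evol_def adj_def)
  qed
qed

lemma skraus_covariant_channel: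
  assumes fin: "finite J" and gb: "\<forall>j\<in>J. \<forall>a<n'. g j a < d"
    and comp: "\<forall>x<d. (\<Sum>j\<in>J. \<Sum>a<n'. if g j a = x then c j a * cnj (c j a) else 0) = 1"
    and dH: "dim_row H = d" and dH': "dim_row H' = n'"
    and EH: "\<forall>x<d. H $$ (x,x) = complex_of_real (E x)"
    and EH': "\<forall>a<n'. H' $$ (a,a) = complex_of_real (E' a)"
    and cov: "\<forall>j\<in>J. \<forall>a<n'. \<forall>b<n'. c j a \<noteq> 0 \<longrightarrow> c j b \<noteq> 0 \<longrightarrow> E (g j a) - E (g j b) = E' a - E' b"
  shows "covariant_channel H H' (skraus n' J g c)"
  unfolding covariant_channel_def channel_def dH dH'
  using skraus_lin[OF gb] skraus_cp[OF gb] skraus_tp[OF fin gb comp]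
    skraus_cov[OF gb dH dH' EH EH' cov] dH by simp



fun bc :: "nat \<Rightarrow> nat \<Rightarrow> nat" where
  "bc 0 x = 0"
| "bc (Suc m) x = bc m (x div 2) + x mod 2"

lemma kron_carrier: "kron A B \<in> carrier_mat (dim_row A * dim_row B) (dim_col A * dim_col B)"
  by (simp add: kron_def)

lemma kron_entry:
  assumes "A \<in> carrier_mat n1 m1" "B \<in> carrier_mat n2 m2" "p < n1 * n2" "q < m1 * m2"
  shows "kron A B $$ (p,q) = A $$ (p div n2, q div m2) * B $$ (p mod n2, q mod m2)"
  using assms by (simp add: kron_def)

lemma kron_dim: "dim_col (kron A B) = dim_col A * dim_col B" "dim_row (kron A B) = dim_row A * dim_row B"
  by (simp_all add: kron_def)

lemma H_T_dim: "dim_row (H_T \<delta>) = 2" "dim_col (H_T \<delta>) = 2" by (simp_all add: H_T_def)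

lemma H_T_carrier: "H_T \<delta> \<in> carrier_mat 2 2" by (simp add: H_T_def)

lemma ham_pow_dim: "dim_row (ham_pow (H_T \<delta>) m) = 2^m \<and> dim_col (ham_pow (H_T \<delta>) m) = 2^m"
proof (induction m)
  case 0 then show ?case by (simp only: ham_pow.simps power_0) simp
next
  case (Suc m)
  have "dim_col (ham_pow (H_T \<delta>) (Suc m)) = dim_col (kron (1\<^sub>m (dim_row (ham_pow (H_T \<delta>) m))) (H_T \<delta>))"
    by (simp only: ham_pow.simps index_add_mat(3))
  also have "\<dots> = 2^m * 2" by (simp only: kron_dim H_T_dim index_one_mat(3) Suc.IH)
  finally have 1: "dim_col (ham_pow (H_T \<delta>) (Suc m)) = 2^Suc m" by simp
  have "dim_row (ham_pow (H_T \<delta>) (Suc m)) = dim_row (kron (1\<^sub>m (dim_row (ham_pow (H_T \<delta>) m))) (H_T \<delta>))"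
    by (simp only: ham_pow.simps index_add_mat(2))
  also have "\<dots> = 2^m * 2" by (simp only: kron_dim H_T_dim index_one_mat(2) Suc.IH)
  finally have 2: "dim_row (ham_pow (H_T \<delta>) (Suc m)) = 2^Suc m" by simp
  show ?case using 1 2 by simp
qed

lemma ham_pow_carrier: "ham_pow (H_T \<delta>) m \<in> carrier_mat (2^m) (2^m)"
  using ham_pow_dim[of \<delta> m] by (intro carrier_matI) auto

lemma ham_pow_diag:
  "x < 2^m \<Longrightarrow> ham_pow (H_T \<delta>) m $$ (x,x) = complex_of_real (\<delta> * real (bc m x))"
proof (induction m arbitrary: x)
  case 0 then show ?case by (simp only: ham_pow.simps power_0 bc.simps) simp
next
  case (Suc m)
  have C: "ham_pow (H_T \<delta>) m \<in> carrier_mat (2^m) (2^m)" by (rule ham_pow_carrier)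
  have dr: "dim_row (ham_pow (H_T \<delta>) m) = 2^m" using C by simp
  have x2: "x div 2 < 2^m" using Suc.prems by (simp add: div_less_iff_less_mult)
  have xl: "x < 2^m * 2" using Suc.prems by (simp add: mult.commute)
  have I1: "1\<^sub>m 2 \<in> carrier_mat 2 2" and I2: "1\<^sub>m (2^m) \<in> carrier_mat (2^m) (2^m)" by auto
  have k1: "kron (ham_pow (H_T \<delta>) m) (1\<^sub>m 2) $$ (x,x) = ham_pow (H_T \<delta>) m $$ (x div 2, x div 2)"
    using kron_entry[OF C I1 xl xl] by simp
  have k2: "kron (1\<^sub>m (2^m)) (H_T \<delta>) $$ (x,x) = (if x mod 2 = 1 then complex_of_real \<delta> else 0)"
    using kron_entry[OF I2 H_T_carrier xl xl] x2 by (simp add: H_T_def)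
  have kc: "kron (1\<^sub>m (2^m)) (H_T \<delta>) \<in> carrier_mat (2^m*2) (2^m*2)"
    using kron_carrier[of "1\<^sub>m (2^m)" "H_T \<delta>"] H_T_dim by simp
  have "ham_pow (H_T \<delta>) (Suc m) $$ (x,x) =
      kron (ham_pow (H_T \<delta>) m) (1\<^sub>m 2) $$ (x,x) + kron (1\<^sub>m (2^m)) (H_T \<delta>) $$ (x,x)"
    unfolding ham_pow.simps H_T_dim dr using kc xl by (simp only: index_add_mat(1) carrier_matD)
  also have "\<dots> = ham_pow (H_T \<delta>) m $$ (x div 2, x div 2) + (if x mod 2 = 1 then complex_of_real \<delta> else 0)"
    using k1 k2 by simp
  also have "\<dots> = complex_of_real (\<delta> * real (bc (Suc m) x))"
    using Suc.IH[OF x2] by (cases "x mod 2 = 1") (auto simp: algebra_simps)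
  finally show ?case .
qed

lemma proj_plus: "proj plus_state \<in> carrier_mat 2 2"
  "i < 2 \<Longrightarrow> j < 2 \<Longrightarrow> proj plus_state $$ (i,j) = 1/2"
proof -
  show "proj plus_state \<in> carrier_mat 2 2" by (simp add: proj_def plus_state_def)
  assume "i < 2" "j < 2"
  then have "proj plus_state $$ (i,j) = complex_of_real (1 / sqrt 2) * cnj (complex_of_real (1 / sqrt 2))"
    by (simp add: proj_def plus_state_def)
  also have "\<dots> = complex_of_real ((1 / sqrt 2) * (1 / sqrt 2))"
    by (simp only: complex_cnj_complex_of_real of_real_mult)
  also have "(1 / sqrt 2) * (1 / sqrt 2) = (1/2::real)"
  proof -
    have "(1 / sqrt 2) * (1 / sqrt 2) = 1 / (sqrt 2 * sqrt (2::real))" by simp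
    also have "\<dots> = 1/2" by simp
    finally show ?thesis .
  qed
  finally show "proj plus_state $$ (i,j) = 1/2" by simp
qed

lemma tensor_pow_plus:
  "tensor_pow (proj plus_state) m \<in> carrier_mat (2^m) (2^m) \<and>
   (\<forall>x<2^m. \<forall>y<2^m. tensor_pow (proj plus_state) m $$ (x,y) = (1/2)^m)"
proof (induction m)
  case 0 then show ?case by (simp only: tensor_pow.simps power_0) simp
next
  case (Suc m)
  then have C: "tensor_pow (proj plus_state) m \<in> carrier_mat (2^m) (2^m)" by simp
  have "tensor_pow (proj plus_state) (Suc m) \<in> carrier_mat (2^Suc m) (2^Suc m)"
    using kron_carrier[of "tensor_pow (proj plus_state) m" "proj plus_state"] C proj_plus(1)
    by (simp add: mult.commute)
  moreover have "tensor_pow (proj plus_state) (Suc m) $$ (x,y) = (1/2)^Suc m" if "x < 2^Suc m" "y < 2^Suc m" for x y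
  proof -
    have x2: "x div 2 < 2^m" "y div 2 < 2^m" using that by (simp_all add: div_less_iff_less_mult)
    have xl: "x < 2^m * 2" "y < 2^m * 2" using that by (simp_all add: mult.commute)
    have "tensor_pow (proj plus_state) (Suc m) $$ (x,y) =
       tensor_pow (proj plus_state) m $$ (x div 2, y div 2) * proj plus_state $$ (x mod 2, y mod 2)"
      using kron_entry[OF C proj_plus(1) xl] by simp
    also have "\<dots> = (1/2)^m * (1/2)" using Suc.IH x2 proj_plus(2) by simp
    finally show ?thesis by simp
  qed
  ultimately show ?case by blast
qed

lemma H_T'_props: "dim_row (H_T' \<delta> K) = 2*K+1"
  "a < 2*K+1 \<Longrightarrow> H_T' \<delta> K $$ (a,a) = complex_of_real ((real a - real K) * \<delta>)"
  by (simp_all add: H_T'_def)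

lemma eta_proj: "proj (eta_state K L) \<in> carrier_mat (2*K+1) (2*K+1)"
  "a < 2*K+1 \<Longrightarrow> b < 2*K+1 \<Longrightarrow> L > 0 \<Longrightarrow> proj (eta_state K L) $$ (a,b) =
     (if K \<le> a \<and> a < K + L \<and> K \<le> b \<and> b < K + L then complex_of_real (1 / real L) else 0)"
proof -
  show "proj (eta_state K L) \<in> carrier_mat (2*K+1) (2*K+1)" by (simp add: proj_def eta_state_def)
  assume ab: "a < 2*K+1" "b < 2*K+1" and L: "L > 0"
  have s: "(1 / sqrt (real L)) * (1 / sqrt (real L)) = 1 / real L"
  proof -
    have "(1 / sqrt (real L)) * (1 / sqrt (real L)) = 1 / (sqrt (real L) * sqrt (real L))" by simp
    also have "\<dots> = 1 / real L" by simp
    finally show ?thesis .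
  qed
  show "proj (eta_state K L) $$ (a,b) =
     (if K \<le> a \<and> a < K + L \<and> K \<le> b \<and> b < K + L then complex_of_real (1 / real L) else 0)"
  proof -
    have e: "complex_of_real (1 / sqrt (real L)) * cnj (complex_of_real (1 / sqrt (real L))) = complex_of_real (1 / real L)"
      by (simp only: complex_cnj_complex_of_real of_real_mult[symmetric] s)
    show ?thesis using ab e by (simp add: proj_def eta_state_def)
  qed
qed




definition lev :: "nat \<Rightarrow> nat \<Rightarrow> nat set" where
  "lev m n = {x. x < 2^m \<and> bc m x = n}"

lemma finite_lev[simp]: "finite (lev m n)"
  unfolding lev_def by simp

lemma lev_Suc:
  "lev (Suc m) n = (\<lambda>y. 2*y) ` lev m n \<union> (\<lambda>y. 2*y+1) ` {y. y < 2^m \<and> Suc (bc m y) = n}"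
proof (rule Set.set_eqI)
  fix x
  show "x \<in> lev (Suc m) n \<longleftrightarrow> x \<in> (\<lambda>y. 2*y) ` lev m n \<union> (\<lambda>y. 2*y+1) ` {y. y < 2^m \<and> Suc (bc m y) = n}"
  proof
    assume x: "x \<in> lev (Suc m) n"
    then have xl: "x < 2^Suc m" and bx: "bc m (x div 2) + x mod 2 = n" unfolding lev_def by auto
    have y: "x div 2 < 2^m" using xl by (simp add: div_less_iff_less_mult)
    show "x \<in> (\<lambda>y. 2*y) ` lev m n \<union> (\<lambda>y. 2*y+1) ` {y. y < 2^m \<and> Suc (bc m y) = n}"
    proof (cases "x mod 2 = 0")
      case True
      then have "x = 2 * (x div 2)" by presburger
      moreover have "x div 2 \<in> lev m n" using y bx True unfolding lev_def by simp
      ultimately show ?thesis by blast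
    next
      case False
      then have m1: "x mod 2 = 1" by simp
      then have "x = 2 * (x div 2) + 1" by presburger
      moreover have "x div 2 \<in> {y. y < 2^m \<and> Suc (bc m y) = n}" using y bx m1 by simp
      ultimately show ?thesis by blast
    qed
  next
    assume "x \<in> (\<lambda>y. 2*y) ` lev m n \<union> (\<lambda>y. 2*y+1) ` {y. y < 2^m \<and> Suc (bc m y) = n}"
    then show "x \<in> lev (Suc m) n" unfolding lev_def by auto
  qed
qed

lemma card_lev: "card (lev m n) = m choose n"
proof (induction m arbitrary: n)
  case 0
  have "lev 0 n = (if n = 0 then {0} else {})" unfolding lev_def by auto
  then show ?case by simp
next
  case (Suc m)
  define A1 where "A1 = (\<lambda>y::nat. 2*y) ` lev m n"
  define A2 where "A2 = (\<lambda>y::nat. 2*y+1) ` {y. y < 2^m \<and> Suc (bc m y) = n}"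
  have inj1: "inj_on (\<lambda>y::nat. 2*y) A" for A by (auto simp: inj_on_def)
  have inj2: "inj_on (\<lambda>y::nat. 2*y+1) A" for A by (auto simp: inj_on_def)
  have ne: "2*a \<noteq> 2*b+(1::nat)" for a b by presburger
  have disj: "A1 \<inter> A2 = {}" unfolding A1_def A2_def using ne by blast
  have fin2: "finite {y. y < (2::nat)^m \<and> Suc (bc m y) = n}" by simp
  have c1: "card A1 = card (lev m n)" unfolding A1_def by (rule card_image[OF inj1])
  have c2: "card A2 = card {y. y < 2^m \<and> Suc (bc m y) = n}" unfolding A2_def by (rule card_image[OF inj2])
  have "card (lev (Suc m) n) = card (A1 \<union> A2)" unfolding lev_Suc A1_def A2_def ..
  also have "\<dots> = card A1 + card A2" using disj fin2 unfolding A1_def A2_def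
    by (intro card_Un_disjoint) auto
  also have "\<dots> = card (lev m n) + card {y. y < 2^m \<and> Suc (bc m y) = n}" using c1 c2 by simp
  also have "\<dots> = Suc m choose n"
  proof (cases n)
    case 0
    then have "{y. y < (2::nat)^m \<and> Suc (bc m y) = n} = {}" by auto
    then show ?thesis using Suc.IH 0 by simp
  next
    case (Suc k)
    then have "{y. y < (2::nat)^m \<and> Suc (bc m y) = n} = lev m k" unfolding lev_def by auto
    then show ?thesis using Suc.IH Suc by simp
  qed
  finally show ?case .
qed

definition enum :: "nat \<Rightarrow> nat \<Rightarrow> nat \<Rightarrow> nat" where
  "enum m n = (SOME h. bij_betw h {0..<m choose n} (lev m n))"

lemma enum_bij: "bij_betw (enum m n) {0..<m choose n} (lev m n)"
proof -
  have "\<exists>h. bij_betw h {0..<m choose n} (lev m n)"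
    using ex_bij_betw_nat_finite[OF finite_lev[of m n]] card_lev[of m n] by simp
  then show ?thesis unfolding enum_def by (rule someI_ex)
qed

definition rk :: "nat \<Rightarrow> nat \<Rightarrow> nat" where
  "rk m x = inv_into {0..<m choose bc m x} (enum m (bc m x)) x"

lemma rk_props:
  assumes "x < 2^m"
  shows "rk m x < m choose bc m x" "enum m (bc m x) (rk m x) = x"
proof -
  have xl: "x \<in> lev m (bc m x)" using assms unfolding lev_def by simp
  have b: "bij_betw (enum m (bc m x)) {0..<m choose bc m x} (lev m (bc m x))" by (rule enum_bij)
  then have "x \<in> enum m (bc m x) ` {0..<m choose bc m x}" using xl by (simp add: bij_betw_def)
  then have "inv_into {0..<m choose bc m x} (enum m (bc m x)) x \<in> {0..<m choose bc m x}"
    and "enum m (bc m x) (inv_into {0..<m choose bc m x} (enum m (bc m x)) x) = x"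
    by (rule inv_into_into, rule f_inv_into_f)
  then show "rk m x < m choose bc m x" "enum m (bc m x) (rk m x) = x"
    unfolding rk_def by auto
qed

lemma enum_eq:
  assumes r: "r < m choose n" and e: "enum m n r = x"
  shows "x < 2^m" "bc m x = n" "rk m x = r"
proof -
  have b: "bij_betw (enum m n) {0..<m choose n} (lev m n)" by (rule enum_bij)
  then have "x \<in> lev m n" using r e by (auto simp: bij_betw_def)
  then show xl: "x < 2^m" and bx: "bc m x = n" unfolding lev_def by auto
  have inj: "inj_on (enum m n) {0..<m choose n}" using b by (simp add: bij_betw_def)
  show "rk m x = r" unfolding rk_def bx using inv_into_f_f[OF inj, of r] r e by simp
qed

lemma enum_lt:
  assumes "r < m choose n" shows "enum m n r < 2^m"
  using enum_eq(1)[OF assms refl] .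


definition blk :: "nat \<Rightarrow> nat \<Rightarrow> nat \<Rightarrow> nat" where
  "blk m L q = Min ((\<lambda>k. m choose (q*L + k)) ` {..<L})"

definition cov :: "nat \<Rightarrow> nat \<Rightarrow> nat \<Rightarrow> bool" where
  "cov m L x \<longleftrightarrow> rk m x < blk m L (bc m x div L)"

definition Tset :: "nat \<Rightarrow> nat \<Rightarrow> (nat \<times> nat) set" where
  "Tset m L = (SIGMA q:{..<m div L + 1}. {..<blk m L q})"

definition Uset :: "nat \<Rightarrow> nat \<Rightarrow> nat set" where
  "Uset m L = {x. x < 2^m \<and> \<not> cov m L x}"

definition JJ :: "nat \<Rightarrow> nat \<Rightarrow> ((nat \<times> nat) + (nat \<times> nat)) set" where
  "JJ m L = Inl ` Tset m L \<union> Inr ` (Uset m L \<times> {..<L})"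

definition gg :: "nat \<Rightarrow> nat \<Rightarrow> nat \<Rightarrow> ((nat \<times> nat) + (nat \<times> nat)) \<Rightarrow> nat \<Rightarrow> nat" where
  "gg m L K j a = (case j of Inl p \<Rightarrow> (if K \<le> a \<and> a < K + L then enum m (fst p * L + (a - K)) (snd p) else 0)
                      | Inr p \<Rightarrow> fst p)"

definition cc :: "nat \<Rightarrow> nat \<Rightarrow> ((nat \<times> nat) + (nat \<times> nat)) \<Rightarrow> nat \<Rightarrow> complex" where
  "cc L K j a = (case j of Inl p \<Rightarrow> (if K \<le> a \<and> a < K + L then 1 else 0)
                   | Inr p \<Rightarrow> (if a = K + snd p then complex_of_real (1 / sqrt (real L)) else 0))"

lemma gg_simps[simp]:
  "gg m L K (Inl p) a = (if K \<le> a \<and> a < K + L then enum m (fst p * L + (a - K)) (snd p) else 0)"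
  "gg m L K (Inr p) a = fst p"
  by (simp_all add: gg_def)

lemma cc_simps[simp]:
  "cc L K (Inl p) a = (if K \<le> a \<and> a < K + L then 1 else 0)"
  "cc L K (Inr p) a = (if a = K + snd p then complex_of_real (1 / sqrt (real L)) else 0)"
  by (simp_all add: cc_def)

lemma blk_le: "k < L \<Longrightarrow> blk m L q \<le> m choose (q*L + k)"
  unfolding blk_def by (rule Min_le) auto

lemma blk_attained: "L > 0 \<Longrightarrow> \<exists>k<L. blk m L q = m choose (q*L + k)"
proof -
  assume "L > 0"
  then have "blk m L q \<in> (\<lambda>k. m choose (q*L + k)) ` {..<L}"
    unfolding blk_def by (intro Min_in) auto
  then show ?thesis by auto
qed

lemma finite_Tset[simp]: "finite (Tset m L)" unfolding Tset_def by simp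
lemma finite_Uset[simp]: "finite (Uset m L)" unfolding Uset_def by simp
lemma finite_JJ[simp]: "finite (JJ m L)" unfolding JJ_def by simp

lemma sum_JJ:
  "(\<Sum>j\<in>JJ m L. F j) = (\<Sum>p\<in>Tset m L. F (Inl p)) + (\<Sum>y\<in>Uset m L. \<Sum>i<L. F (Inr (y,i)))"
proof -
  have "(\<Sum>j\<in>JJ m L. F j) = (\<Sum>j\<in>Inl ` Tset m L. F j) + (\<Sum>j\<in>Inr ` (Uset m L \<times> {..<L}). F j)"
    unfolding JJ_def by (rule sum.union_disjoint) auto
  also have "(\<Sum>j\<in>Inl ` Tset m L. F j) = (\<Sum>p\<in>Tset m L. F (Inl p))"
    by (simp add: sum.reindex)
  also have "(\<Sum>j\<in>Inr ` (Uset m L \<times> {..<L}). F j) = (\<Sum>p\<in>Uset m L \<times> {..<L}. F (Inr p))"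
    by (simp add: sum.reindex)
  also have "\<dots> = (\<Sum>(y,i)\<in>Uset m L \<times> {..<L}. F (Inr (y,i)))"
    by (intro sum.cong refl) auto
  also have "\<dots> = (\<Sum>y\<in>Uset m L. \<Sum>i<L. F (Inr (y,i)))"
    by (rule sum.cartesian_product[symmetric])
  finally show ?thesis .
qed

lemma Tset_mem: "p \<in> Tset m L \<longleftrightarrow> fst p < m div L + 1 \<and> snd p < blk m L (fst p)"
  unfolding Tset_def by (cases p) auto

lemma gg_bound:
  assumes "j \<in> JJ m L" shows "gg m L K j a < 2^m"
proof (cases j)
  case (Inl p)
  then have p: "snd p < blk m L (fst p)" using assms unfolding JJ_def by (auto simp: Tset_mem)
  show ?thesis
  proof (cases "K \<le> a \<and> a < K + L")
    case True
    then have "a - K < L" by linarith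
    then have "snd p < m choose (fst p * L + (a - K))" using p blk_le[of "a - K" L m "fst p"] by simp
    then have "enum m (fst p * L + (a - K)) (snd p) < 2^m" by (rule enum_lt)
    moreover have "gg m L K j a = enum m (fst p * L + (a - K)) (snd p)"
      by (simp only: Inl gg_simps) (rule if_P[OF True])
    ultimately show ?thesis by simp
  qed (use Inl in auto)
next
  case (Inr p)
  then show ?thesis using assms unfolding JJ_def Uset_def by auto
qed

lemma bc_le: "x < 2^m \<Longrightarrow> bc m x \<le> m"
proof (induction m arbitrary: x)
  case 0 then show ?case by simp
next
  case (Suc m)
  have "x div 2 < 2^m" using Suc.prems by (simp add: div_less_iff_less_mult)
  then show ?case using Suc.IH[of "x div 2"] by simp
qed

lemma comp_JJ:
  assumes L: "L > 0" and KL: "L \<le> K" and x: "x < 2^m"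
  shows "(\<Sum>j\<in>JJ m L. \<Sum>a<2*K+1. if gg m L K j a = x then cc L K j a * cnj (cc L K j a) else 0) = 1"
proof -
  define q0 where "q0 = bc m x div L"
  define a0 where "a0 = K + bc m x mod L"
  define r0 where "r0 = rk m x"
  have rk0: "rk m x < m choose bc m x" "enum m (bc m x) (rk m x) = x" using rk_props[OF x] by auto
  have bdec: "bc m x = q0 * L + bc m x mod L" unfolding q0_def by simp
  have modL: "bc m x mod L < L" using L by simp
  have T1: "(if gg m L K (Inl p) a = x then cc L K (Inl p) a * cnj (cc L K (Inl p) a) else 0)
      = (if p = (q0, r0) then (if a = a0 then (if cov m L x then 1 else 0) else 0) else 0)"
    if p: "p \<in> Tset m L" and a: "a < 2*K+1" for p a
  proof (cases "K \<le> a \<and> a < K + L")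
    case False
    then have "a \<noteq> a0" unfolding a0_def using modL by auto
    then show ?thesis using False by auto
  next
    case True
    define k where "k = a - K"
    have k: "k < L" "a = K + k" unfolding k_def using True by auto
    have rb: "snd p < m choose (fst p * L + k)"
      using p blk_le[OF k(1), of m "fst p"] by (simp add: Tset_mem)
    have "enum m (fst p * L + k) (snd p) = x \<longleftrightarrow> p = (q0, r0) \<and> a = a0 \<and> cov m L x"
    proof
      assume e: "enum m (fst p * L + k) (snd p) = x"
      have b: "bc m x = fst p * L + k" and r: "rk m x = snd p" using enum_eq[OF rb e] by auto
      have "q0 = fst p" unfolding q0_def b using k L by simp
      moreover have "bc m x mod L = k" unfolding b using k by simp
      moreover have "cov m L x" unfolding cov_def r using p \<open>q0 = fst p\<close> unfolding q0_def by (simp add: Tset_mem)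
      ultimately show "p = (q0, r0) \<and> a = a0 \<and> cov m L x" unfolding a0_def r0_def using r k
        by (cases p) auto
    next
      assume "p = (q0, r0) \<and> a = a0 \<and> cov m L x"
      then have pp: "p = (q0, r0)" and aa: "a = a0" by auto
      have "k = bc m x mod L" using aa k unfolding a0_def by simp
      then have "fst p * L + k = bc m x" using pp bdec by simp
      then show "enum m (fst p * L + k) (snd p) = x" using pp rk0 unfolding r0_def by simp
    qed
    note iff = this
    have g: "gg m L K (Inl p) a = enum m (fst p * L + k) (snd p)"
      unfolding k_def by (simp only: gg_simps) (rule if_P[OF True])
    have c: "cc L K (Inl p) a = 1" using True by simp
    show ?thesis unfolding g c iff by simp
  qed
  have covmem: "(q0, r0) \<in> Tset m L \<and> a0 < 2*K+1" if "cov m L x"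
  proof -
    have "bc m x \<le> m" by (rule bc_le[OF x])
    then have "q0 < m div L + 1" unfolding q0_def using div_le_mono[of "bc m x" m L] by simp
    moreover have "r0 < blk m L q0" using that unfolding cov_def q0_def r0_def .
    moreover have "a0 < 2*K+1" unfolding a0_def using modL KL by simp
    ultimately show ?thesis by (simp add: Tset_mem)
  qed
  have part1: "(\<Sum>p\<in>Tset m L. \<Sum>a<2*K+1. if gg m L K (Inl p) a = x then cc L K (Inl p) a * cnj (cc L K (Inl p) a) else 0)
     = (if cov m L x then 1 else 0)"
  proof -
    have "(\<Sum>p\<in>Tset m L. \<Sum>a<2*K+1. if gg m L K (Inl p) a = x then cc L K (Inl p) a * cnj (cc L K (Inl p) a) else 0)
      = (\<Sum>p\<in>Tset m L. \<Sum>a<2*K+1. if p = (q0, r0) then (if a = a0 then (if cov m L x then 1 else 0) else 0) else 0)"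
      using T1 by (intro sum.cong refl) auto
    also have "\<dots> = (\<Sum>p\<in>Tset m L. if p = (q0, r0) then (\<Sum>a<2*K+1. if a = a0 then (if cov m L x then 1 else 0) else 0) else 0)"
      by (intro sum.cong refl) auto
    also have "\<dots> = (if (q0, r0) \<in> Tset m L then (\<Sum>a<2*K+1. if a = a0 then (if cov m L x then 1 else (0::complex)) else 0) else 0)"
      by (simp add: sum.delta)
    also have "\<dots> = (if cov m L x then 1 else 0)"
      using covmem by (auto simp: sum.delta)
    finally show ?thesis .
  qed
  have cc2: "complex_of_real (1 / sqrt (real L)) * cnj (complex_of_real (1 / sqrt (real L))) = 1 / of_nat L"
  proof -
    have s: "(1 / sqrt (real L)) * (1 / sqrt (real L)) = 1 / real L"
    proof -
      have "(1 / sqrt (real L)) * (1 / sqrt (real L)) = 1 / (sqrt (real L) * sqrt (real L))" by simp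
      also have "\<dots> = 1 / real L" by simp
      finally show ?thesis .
    qed
    have "complex_of_real (1 / sqrt (real L)) * cnj (complex_of_real (1 / sqrt (real L))) = complex_of_real (1 / real L)"
      by (simp only: complex_cnj_complex_of_real of_real_mult[symmetric] s)
    then show ?thesis by simp
  qed
  have part2: "(\<Sum>y\<in>Uset m L. \<Sum>i<L. \<Sum>a<2*K+1. if gg m L K (Inr (y,i)) a = x then cc L K (Inr (y,i)) a * cnj (cc L K (Inr (y,i)) a) else 0)
     = (if cov m L x then 0 else 1)"
  proof -
    have inner: "(\<Sum>a<2*K+1. if a = K + i then 1 / of_nat L else (0::complex)) = 1 / of_nat L" if "i < L" for i
      using that KL by (simp add: sum.delta)
    have ccsq: "cc L K (Inr q) a * cnj (cc L K (Inr q) a) = (if a = K + snd q then 1 / of_nat L else 0)" for q a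
    proof (cases "a = K + snd q")
      case True then show ?thesis by (simp only: cc_simps True simp_thms if_True cc2)
    next
      case False then show ?thesis by simp
    qed
    have t: "(\<Sum>a<2*K+1. if gg m L K (Inr (y,i)) a = x then cc L K (Inr (y,i)) a * cnj (cc L K (Inr (y,i)) a) else 0)
       = (if y = x then (\<Sum>a<2*K+1. if a = K + i then 1 / of_nat L else (0::complex)) else 0)" for y i
    proof (cases "y = x")
      case True then show ?thesis by (simp only: gg_simps fst_conv snd_conv ccsq True simp_thms if_True)
    next
      case False then show ?thesis by simp
    qed
    have "(\<Sum>y\<in>Uset m L. \<Sum>i<L. \<Sum>a<2*K+1. if gg m L K (Inr (y,i)) a = x then cc L K (Inr (y,i)) a * cnj (cc L K (Inr (y,i)) a) else 0)
      = (\<Sum>y\<in>Uset m L. if y = x then (\<Sum>i<L. \<Sum>a<2*K+1. if a = K + i then 1 / of_nat L else (0::complex)) else 0)"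
      unfolding t by (intro sum.cong refl) (cases "y = x", simp_all)
    also have "\<dots> = (if x \<in> Uset m L then (\<Sum>i<L. \<Sum>a<2*K+1. if a = K + i then 1 / of_nat L else (0::complex)) else 0)"
      by (simp add: sum.delta')
    also have "(\<Sum>i<L. \<Sum>a<2*K+1. if a = K + i then 1 / of_nat L else (0::complex)) = 1"
      using inner L by simp
    finally show ?thesis using x unfolding Uset_def by auto
  qed
  show ?thesis unfolding sum_JJ part1 part2 by simp
qed


lemma cov_JJ:
  assumes "j \<in> JJ m L" "cc L K j a \<noteq> 0" "cc L K j b \<noteq> 0"
  shows "\<delta> * real (bc m (gg m L K j a)) - \<delta> * real (bc m (gg m L K j b)) =
         (real a - real K) * \<delta> - (real b - real K) * \<delta>"
proof (cases j)
  case (Inl p)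
  then have p: "snd p < blk m L (fst p)" using assms(1) unfolding JJ_def by (auto simp: Tset_mem)
  have ia: "K \<le> a \<and> a < K + L" using assms(2) Inl by (auto split: if_splits)
  have ib: "K \<le> b \<and> b < K + L" using assms(3) Inl by (auto split: if_splits)
  have bcv: "bc m (gg m L K j c) = fst p * L + (c - K)" if ic: "K \<le> c \<and> c < K + L" for c
  proof -
    have "c - K < L" using ic by linarith
    then have r: "snd p < m choose (fst p * L + (c - K))" using p blk_le[of "c - K" L m "fst p"] by simp
    have "gg m L K j c = enum m (fst p * L + (c - K)) (snd p)"
      by (simp only: Inl gg_simps) (rule if_P[OF ic])
    then show ?thesis using enum_eq(2)[OF r] by simp
  qed
  show ?thesis using bcv[OF ia] bcv[OF ib] ia ib by (simp add: algebra_simps of_nat_diff)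
next
  case (Inr p)
  then have "a = b" using assms(2,3) by (auto split: if_splits)
  then show ?thesis by simp
qed

lemma out_JJ:
  assumes "a < 2*K+1" "b < 2*K+1"
  shows "(\<Sum>j\<in>JJ m L. cc L K j a * cnj (cc L K j b)) =
     (if K \<le> a \<and> a < K + L \<and> K \<le> b \<and> b < K + L
      then of_nat (card (Tset m L)) + (if a = b then of_nat (card (Uset m L)) / of_nat L else 0) else 0)"
proof -
  have p1: "(\<Sum>p\<in>Tset m L. cc L K (Inl p) a * cnj (cc L K (Inl p) b)) =
      (if K \<le> a \<and> a < K + L \<and> K \<le> b \<and> b < K + L then of_nat (card (Tset m L)) else 0)"
    by simp
  have s2: "cc L K (Inr (y,i)) a * cnj (cc L K (Inr (y,i)) b) =
      (if a = K + i \<and> b = K + i then 1 / of_nat L else 0)" for y i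
  proof (cases "a = K + i \<and> b = K + i")
    case True
    have s: "(1 / sqrt (real L)) * (1 / sqrt (real L)) = 1 / real L"
    proof -
      have "(1 / sqrt (real L)) * (1 / sqrt (real L)) = 1 / (sqrt (real L) * sqrt (real L))" by simp
      also have "\<dots> = 1 / real L" by simp
      finally show ?thesis .
    qed
    have "complex_of_real (1 / sqrt (real L)) * cnj (complex_of_real (1 / sqrt (real L))) = complex_of_real (1 / real L)"
      by (simp only: complex_cnj_complex_of_real of_real_mult[symmetric] s)
    then show ?thesis using True by simp
  next
    case False then show ?thesis by auto
  qed
  have p2i: "(\<Sum>i<L. if a = K + i \<and> b = K + i then 1 / of_nat L else (0::complex)) =
     (if K \<le> a \<and> a < K + L \<and> a = b then 1 / of_nat L else 0)"
  proof (cases "K \<le> a \<and> a < K + L \<and> a = b")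
    case True
    then have "(\<Sum>i<L. if a = K + i \<and> b = K + i then 1 / of_nat L else (0::complex)) =
       (\<Sum>i<L. if i = a - K then 1 / of_nat L else (0::complex))"
      by (intro sum.cong refl) auto
    also have "\<dots> = 1 / of_nat L"
    proof -
      have "a - K < L" using True by linarith
      then show ?thesis by simp
    qed
    finally show ?thesis using True by simp
  next
    case False
    then have nn: "\<forall>i<L. \<not> (a = K + i \<and> b = K + i)" by auto
    have z: "(\<Sum>i<L. if a = K + i \<and> b = K + i then 1 / of_nat L else (0::complex)) = 0"
      using nn by (intro sum.neutral) auto
    show ?thesis by (simp only: if_not_P[OF False] z)
  qed
  have p2: "(\<Sum>y\<in>Uset m L. \<Sum>i<L. cc L K (Inr (y,i)) a * cnj (cc L K (Inr (y,i)) b)) =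
     of_nat (card (Uset m L)) * (if K \<le> a \<and> a < K + L \<and> a = b then 1 / of_nat L else 0)"
    unfolding s2 p2i by simp
  show ?thesis unfolding sum_JJ p1 p2 by auto
qed



lemma sum_split_add: "(\<Sum>n<a+b. f n) = (\<Sum>n<a. f n) + (\<Sum>k<b. f (a+k::nat))"
  by (induction b) (simp_all add: add.assoc)

lemma sum_blocks: "(\<Sum>n<Q*L. f n) = (\<Sum>q<Q. \<Sum>k<L. f (q*L+k::nat))"
proof (induction Q)
  case 0 then show ?case by simp
next
  case (Suc Q)
  have "(\<Sum>n<Suc Q * L. f n) = (\<Sum>n<Q*L + L. f n)" by (simp add: add.commute)
  also have "\<dots> = (\<Sum>n<Q*L. f n) + (\<Sum>k<L. f (Q*L+k))" by (rule sum_split_add)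
  finally show ?case using Suc.IH by simp
qed

lemma binom_sum_ext: "m < M \<Longrightarrow> (\<Sum>n<M. m choose n) = 2^m"
proof -
  assume mM: "m < M"
  have "(\<Sum>n<M. m choose n) = (\<Sum>n<Suc m + (M - Suc m). m choose n)" using mM by simp
  also have "\<dots> = (\<Sum>n<Suc m. m choose n) + (\<Sum>k<M - Suc m. m choose (Suc m + k))"
    by (rule sum_split_add)
  also have "(\<Sum>k<M - Suc m. m choose (Suc m + k)) = 0" by (simp add: binomial_eq_0)
  also have "(\<Sum>n<Suc m. m choose n) = 2^m" using choose_row_sum[of m] by (simp add: lessThan_Suc_atMost)
  finally show ?thesis by simp
qed

lemma var_bound:
  fixes f :: "nat \<Rightarrow> real"
  shows "\<bar>f (s+k) - f s\<bar> \<le> (\<Sum>i<k. \<bar>f (s+i+1) - f (s+i)\<bar>)"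
proof (induction k)
  case 0 then show ?case by simp
next
  case (Suc k)
  have "\<bar>f (s + Suc k) - f s\<bar> \<le> \<bar>f (s+k+1) - f (s+k)\<bar> + \<bar>f (s+k) - f s\<bar>" by simp
  also have "\<dots> \<le> \<bar>f (s+k+1) - f (s+k)\<bar> + (\<Sum>i<k. \<bar>f (s+i+1) - f (s+i)\<bar>)" using Suc.IH by simp
  finally show ?case by (simp add: add.commute)
qed

lemma var_bound2:
  fixes f :: "nat \<Rightarrow> real"
  assumes "k < L" "k' < L"
  shows "f (s+k) - f (s+k') \<le> 2 * (\<Sum>i<L. \<bar>f (s+i+1) - f (s+i)\<bar>)"
proof -
  have m: "(\<Sum>i<k. \<bar>f (s+i+1) - f (s+i)\<bar>) \<le> (\<Sum>i<L. \<bar>f (s+i+1) - f (s+i)\<bar>)"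
    if "k < L" for k using that by (intro sum_mono2) auto
  have "f (s+k) - f (s+k') \<le> \<bar>f (s+k) - f s\<bar> + \<bar>f (s+k') - f s\<bar>" by simp
  also have "\<dots> \<le> (\<Sum>i<k. \<bar>f (s+i+1) - f (s+i)\<bar>) + (\<Sum>i<k'. \<bar>f (s+i+1) - f (s+i)\<bar>)"
    using var_bound[of f s k] var_bound[of f s k'] by simp
  also have "\<dots> \<le> 2 * (\<Sum>i<L. \<bar>f (s+i+1) - f (s+i)\<bar>)" using m[OF assms(1)] m[OF assms(2)] by simp
  finally show ?thesis .
qed

lemma tv_binom:
  "(\<Sum>i<M. \<bar>real (m choose (i+1)) - real (m choose i)\<bar>) \<le> 2 * real (m choose (m div 2))"
proof -
  define f where "f i = real (m choose i)" for i
  define h where "h = m div 2"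
  have up: "f i \<le> f (i+1)" if "i < h" for i
    unfolding f_def using binomial_mono[of i "i+1" m] that h_def by simp
  have down: "f (i+1) \<le> f i" if "h \<le> i" for i
  proof (cases "i + 1 \<le> m")
    case True then show ?thesis unfolding f_def using binomial_antimono[of i "i+1" m] that h_def by simp
  next
    case False then show ?thesis unfolding f_def by (simp add: binomial_eq_0)
  qed
  have "(\<Sum>i<M. \<bar>f (i+1) - f i\<bar>) \<le> (\<Sum>i<h+M. \<bar>f (i+1) - f i\<bar>)"
    by (intro sum_mono2) auto
  also have "\<dots> = (\<Sum>i<h. \<bar>f (i+1) - f i\<bar>) + (\<Sum>k<M. \<bar>f (h+k+1) - f (h+k)\<bar>)"
    by (rule sum_split_add)
  also have "(\<Sum>i<h. \<bar>f (i+1) - f i\<bar>) = (\<Sum>i<h. f (Suc i) - f i)"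
    using up by (intro sum.cong refl) auto
  also have "\<dots> = f h - f 0" by (rule sum_lessThan_telescope)
  also have "(\<Sum>k<M. \<bar>f (h+k+1) - f (h+k)\<bar>) = (\<Sum>k<M. f (h+k) - f (h + Suc k))"
    using down by (intro sum.cong refl) auto
  also have "\<dots> = f (h+0) - f (h+M)" by (rule sum_lessThan_telescope'[where f="\<lambda>k. f (h+k)"])
  also have "f h - f 0 + (f (h+0) - f (h+M)) \<le> 2 * f h"
    unfolding f_def by simp
  finally show ?thesis unfolding f_def h_def by simp
qed

lemma central_binom_bound:
  "real ((2*N) choose N)^2 * (2*N+1) \<le> 16^N"
proof (induction N)
  case 0 then show ?case by simp
next
  case (Suc N)
  define c where "c = real ((2*N) choose N)"
  have rec: "real (N+1) * real ((2*(N+1)) choose (N+1)) = 2 * (2*N+1) * c"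
  proof -
    have e1: "Suc N * (Suc (2*N+1) choose Suc N) = Suc (2*N+1) * ((2*N+1) choose N)"
      by (rule Suc_times_binomial)
    have e2: "Suc N * (Suc (2*N) choose Suc N) = Suc (2*N) * ((2*N) choose N)"
      by (rule Suc_times_binomial)
    have e3: "(2*N+1) choose N = (2*N+1) choose (N+1)"
      using binomial_symmetric[of N "2*N+1"] by simp
    have A: "(N+1) * ((2*(N+1)) choose (N+1)) = (2*N+2) * ((2*N+1) choose N)"
      using e1 by (simp add: mult_2)
    have B: "(N+1) * ((2*N+1) choose (N+1)) = (2*N+1) * ((2*N) choose N)"
      using e2 by simp
    have "(N+1) * ((N+1) * ((2*(N+1)) choose (N+1))) = (N+1) * (2*(2*N+1) * ((2*N) choose N))"
    proof -
      have "(N+1) * ((N+1) * ((2*(N+1)) choose (N+1))) = (2*N+2) * ((N+1) * ((2*N+1) choose (N+1)))"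
        unfolding A e3 by (simp only: mult.left_commute)
      also have "\<dots> = (2*N+2) * ((2*N+1) * ((2*N) choose N))" unfolding B ..
      also have "\<dots> = (N+1) * (2*(2*N+1) * ((2*N) choose N))" by (simp add: algebra_simps)
      finally show ?thesis .
    qed
    moreover have ne: "N+1 \<noteq> (0::nat)" by simp
    ultimately have "(N+1) * ((2*(N+1)) choose (N+1)) = 2*(2*N+1) * ((2*N) choose N)"
      by (simp only: mult_left_cancel[OF ne])
    then have "real ((N+1) * ((2*(N+1)) choose (N+1))) = real (2*(2*N+1) * ((2*N) choose N))" by (rule arg_cong)
    then show ?thesis unfolding c_def by (simp del: binomial_Suc_Suc add: algebra_simps)
  qed
  have IH: "c^2 * (2*real N+1) \<le> 16^N" using Suc.IH unfolding c_def by (simp add: add.commute)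
  define c' where "c' = real ((2*(N+1)) choose (N+1))"
  have rec': "(real N + 1) * c' = 2 * (2 * real N + 1) * c" using rec unfolding c'_def by (simp add: algebra_simps)
  have "(real N + 1)^2 * (c'^2 * (2*real N+3)) = (2 * (2 * real N + 1) * c)^2 * (2*real N+3)"
    using rec' by (simp add: power_mult_distrib[symmetric] algebra_simps)
  also have "\<dots> = 4 * (2*real N+1) * (2*real N+3) * (c^2 * (2*real N+1))" by (simp add: power2_eq_square algebra_simps)
  also have "\<dots> \<le> 4 * (2*real N+1) * (2*real N+3) * 16^N" using IH by (intro mult_left_mono) auto
  also have "\<dots> \<le> (real N + 1)^2 * 16^(Suc N)"
  proof -
    have "4 * (2*real N+1) * (2*real N+3) \<le> 16 * (real N + 1)^2" by (simp add: power2_eq_square algebra_simps)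
    then have "4 * (2*real N+1) * (2*real N+3) * 16^N \<le> 16 * (real N + 1)^2 * 16^N" by (intro mult_right_mono) auto
    then show ?thesis by (simp add: algebra_simps)
  qed
  finally have "(real N + 1)^2 * (c'^2 * (2*real N+3)) \<le> (real N + 1)^2 * 16^(Suc N)" .
  then have "c'^2 * (2*real N+3) \<le> 16^(Suc N)" by (rule mult_left_le_imp_le) (simp add: add_pos_nonneg)
  then show ?case unfolding c'_def by (simp del: binomial_Suc_Suc add: algebra_simps)
qed



definition bm :: "nat \<Rightarrow> nat \<Rightarrow> nat \<Rightarrow> complex \<Rightarrow> complex \<Rightarrow> complex mat" where
  "bm n K L x y = mat n n (\<lambda>(a,b). if K \<le> a \<and> a < K + L \<and> K \<le> b \<and> b < K + L then (if a = b then x else 0) + y else 0)"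

lemma bm_carrier[simp]: "bm n K L x y \<in> carrier_mat n n" by (simp add: bm_def)
lemma bm_dim[simp]: "dim_row (bm n K L x y) = n" "dim_col (bm n K L x y) = n" by (simp_all add: bm_def)

lemma bm_entry: "a < n \<Longrightarrow> b < n \<Longrightarrow> bm n K L x y $$ (a,b) =
  (if K \<le> a \<and> a < K + L \<and> K \<le> b \<and> b < K + L then (if a = b then x else 0) + y else 0)"
  by (simp add: bm_def)

lemma sum_if_const: "(\<Sum>b\<in>A. if P then f b else 0) = (if P then (\<Sum>b\<in>A. f b) else 0)"
  by (cases P) simp_all

lemma sum_restrict_block:
  fixes K L n :: nat
  assumes "K + L \<le> n"
  shows "(\<Sum>c<n. if K \<le> c \<and> c < K + L then g c else 0) = (\<Sum>c\<in>{K..<K+L}. g c)"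
proof -
  have "(\<Sum>c<n. if K \<le> c \<and> c < K + L then g c else 0) = sum g {c \<in> {..<n}. K \<le> c \<and> c < K + L}"
    by (rule sum.inter_filter[symmetric]) simp
  also have "{c \<in> {..<n}. K \<le> c \<and> c < K + L} = {K..<K+L}" using assms by auto
  finally show ?thesis .
qed

lemma bm_mult:
  assumes n: "K + L \<le> n"
  shows "bm n K L x y * bm n K L x' y' = bm n K L (x * x') (x * y' + y * x' + of_nat L * y * y')"
proof (rule eq_matI)
  fix a b assume "a < dim_row (bm n K L (x * x') (x * y' + y * x' + of_nat L * y * y'))"
    "b < dim_col (bm n K L (x * x') (x * y' + y * x' + of_nat L * y * y'))"
  then have ab: "a < n" "b < n" by auto
  have "(bm n K L x y * bm n K L x' y') $$ (a,b) = (\<Sum>c<n. bm n K L x y $$ (a,c) * bm n K L x' y' $$ (c,b))"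
    using mult_entry[OF bm_carrier bm_carrier ab] .
  also have "\<dots> = bm n K L (x * x') (x * y' + y * x' + of_nat L * y * y') $$ (a,b)"
  proof (cases "K \<le> a \<and> a < K + L \<and> K \<le> b \<and> b < K + L")
    case False
    then have "\<forall>c<n. bm n K L x y $$ (a,c) * bm n K L x' y' $$ (c,b) = 0"
      using ab by (auto simp: bm_entry)
    then have "(\<Sum>c<n. bm n K L x y $$ (a,c) * bm n K L x' y' $$ (c,b)) = 0"
      by (intro sum.neutral) auto
    moreover have "bm n K L (x * x') (x * y' + y * x' + of_nat L * y * y') $$ (a,b) = 0"
      using False ab by (auto simp: bm_entry)
    ultimately show ?thesis by simp
  next
    case True
    have "(\<Sum>c<n. bm n K L x y $$ (a,c) * bm n K L x' y' $$ (c,b)) =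
        (\<Sum>c<n. if K \<le> c \<and> c < K + L then ((if a = c then x else 0) + y) * ((if c = b then x' else 0) + y') else 0)"
      using True ab by (intro sum.cong refl) (auto simp: bm_entry)
    also have "\<dots> = (\<Sum>c\<in>{K..<K+L}. ((if a = c then x else 0) + y) * ((if c = b then x' else 0) + y'))"
      by (rule sum_restrict_block[OF n])
    also have "\<dots> = (\<Sum>c\<in>{K..<K+L}. (if c = a then (if a = b then x * x' else 0) + x * y' else 0) + (if c = b then y * x' else 0) + y * y')"
      by (intro sum.cong refl) (auto simp: algebra_simps)
    also have "\<dots> = (if a = b then x * x' else 0) + x * y' + y * x' + of_nat L * y * y'"
      using True by (simp add: sum.distrib)
    also have "\<dots> = bm n K L (x * x') (x * y' + y * x' + of_nat L * y * y') $$ (a,b)"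
      using True ab by (simp add: bm_entry algebra_simps)
    finally show ?thesis .
  qed
  finally show "(bm n K L x y * bm n K L x' y') $$ (a,b) = bm n K L (x * x') (x * y' + y * x' + of_nat L * y * y') $$ (a,b)" .
qed auto

lemma bm_adj: "adj (bm n K L x y) = bm n K L (cnj x) (cnj y)"
  by (rule eq_matI) (auto simp: adj_def bm_entry)

lemma bm_L1: "bm n K 1 x y = bm n K 1 (x + y) 0"
  by (rule eq_matI) (auto simp: bm_entry)

lemma bm_tr:
  assumes "K + L \<le> n"
  shows "tr (bm n K L x y) = of_nat L * (x + y)"
proof -
  have "tr (bm n K L x y) = (\<Sum>a<n. if K \<le> a \<and> a < K + L then x + y else 0)"
    unfolding tr_def by (intro sum.cong refl) (auto simp: bm_entry)
  also have "\<dots> = (\<Sum>a\<in>{K..<K+L}. x + y)" by (rule sum_restrict_block[OF assms])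
  finally show ?thesis by simp
qed

lemma bm_psd:
  assumes n: "K + L \<le> n" and x: "x \<ge> 0" and y: "y \<ge> 0"
  shows "psd (bm n K L (complex_of_real x) (complex_of_real y))"
proof -
  let ?B = "bm n K L (complex_of_real x) (complex_of_real y)"
  have h: "herm n ?B" unfolding herm_def by (auto simp: bm_entry)
  have q: "0 \<le> Re (qf n ?B v)" for v
  proof -
    have "qf n ?B v = (\<Sum>a<n. if K \<le> a \<and> a < K + L then (\<Sum>b<n. if K \<le> b \<and> b < K + L then
        cnj (v a) * ((if a = b then complex_of_real x else 0) + complex_of_real y) * v b else 0) else 0)"
      unfolding qf_def
    proof (intro sum.cong refl)
      fix a assume a: "a \<in> {..<n}"
      have "(\<Sum>b<n. cnj (v a) * ?B $$ (a,b) * v b) = (\<Sum>b<n. if K \<le> a \<and> a < K + L then (if K \<le> b \<and> b < K + L then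
        cnj (v a) * ((if a = b then complex_of_real x else 0) + complex_of_real y) * v b else 0) else 0)"
        using a by (intro sum.cong refl) (auto simp: bm_entry)
      then show "(\<Sum>b<n. cnj (v a) * ?B $$ (a,b) * v b) = (if K \<le> a \<and> a < K + L then (\<Sum>b<n. if K \<le> b \<and> b < K + L then
        cnj (v a) * ((if a = b then complex_of_real x else 0) + complex_of_real y) * v b else 0) else 0)"
        by (simp only: sum_if_const)
    qed
    also have "\<dots> = (\<Sum>a\<in>{K..<K+L}. \<Sum>b\<in>{K..<K+L}. cnj (v a) * ((if a = b then complex_of_real x else 0) + complex_of_real y) * v b)"
      unfolding sum_restrict_block[OF n] ..
    also have "\<dots> = (\<Sum>a\<in>{K..<K+L}. \<Sum>b\<in>{K..<K+L}. (if b = a then complex_of_real x * (cnj (v a) * v a) else 0) + complex_of_real y * (cnj (v a) * v b))"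
      by (intro sum.cong refl) (auto simp: algebra_simps)
    also have "\<dots> = complex_of_real x * (\<Sum>a\<in>{K..<K+L}. cnj (v a) * v a) + complex_of_real y * (cnj (\<Sum>a\<in>{K..<K+L}. v a) * (\<Sum>b\<in>{K..<K+L}. v b))"
      by (simp add: sum.distrib sum_distrib_left sum_distrib_right cnj_sum algebra_simps)
    finally have e: "qf n ?B v = complex_of_real x * (\<Sum>a\<in>{K..<K+L}. cnj (v a) * v a) + complex_of_real y * (cnj (\<Sum>a\<in>{K..<K+L}. v a) * (\<Sum>b\<in>{K..<K+L}. v b))" .
    have r1: "(\<Sum>a\<in>{K..<K+L}. cnj (v a) * v a) = complex_of_real (\<Sum>a\<in>{K..<K+L}. (cmod (v a))^2)"
      unfolding of_real_sum by (intro sum.cong refl) (simp add: complex_norm_square mult.commute del: of_real_power)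
    have r2: "cnj (\<Sum>a\<in>{K..<K+L}. v a) * (\<Sum>b\<in>{K..<K+L}. v b) = complex_of_real ((cmod (\<Sum>a\<in>{K..<K+L}. v a))^2)"
      by (simp add: complex_norm_square mult.commute del: of_real_power)
    have "Re (qf n ?B v) = x * (\<Sum>a\<in>{K..<K+L}. (cmod (v a))^2) + y * (cmod (\<Sum>a\<in>{K..<K+L}. v a))^2"
      unfolding e r1 r2 by simp
    also have "\<dots> \<ge> 0" using x y by (intro add_nonneg_nonneg mult_nonneg_nonneg sum_nonneg) auto
    finally show ?thesis .
  qed
  show ?thesis using psd_iff[OF bm_carrier] h q by auto
qed


lemma U_count_bound:
  assumes L: "L > 0"
  shows "real (2^m) - real L * (\<Sum>q<m div L + 1. real (blk m L q)) \<le> 4 * real L * real (m choose (m div 2))"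
proof -
  define Q where "Q = m div L + 1"
  define f where "f n = real (m choose n)" for n
  define W where "W q = (\<Sum>i<L. \<bar>f (q*L+i+1) - f (q*L+i)\<bar>)" for q
  have QL: "m < Q * L"
  proof -
    have e: "m div L * L + m mod L = m" by simp
    moreover have "m mod L < L" using L by simp
    ultimately have "m < m div L * L + L" by linarith
    then show ?thesis unfolding Q_def by (simp add: algebra_simps)
  qed
  have tot: "real (2^m) = (\<Sum>q<Q. \<Sum>k<L. f (q*L+k))"
  proof -
    have "(2::nat)^m = (\<Sum>n<Q*L. m choose n)" using binom_sum_ext[OF QL] by simp
    also have "\<dots> = (\<Sum>q<Q. \<Sum>k<L. m choose (q*L+k))" by (rule sum_blocks)
    finally show ?thesis unfolding f_def by (simp add: of_nat_sum)
  qed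
  have each: "f (q*L+k) - real (blk m L q) \<le> 2 * W q" if "k < L" for q k
  proof -
    obtain k0 where k0: "k0 < L" "blk m L q = m choose (q*L+k0)" using blk_attained[OF L] by blast
    show ?thesis using var_bound2[OF that k0(1), of f "q*L"] k0(2) unfolding W_def f_def by simp
  qed
  have "real (2^m) - real L * (\<Sum>q<Q. real (blk m L q)) = (\<Sum>q<Q. \<Sum>k<L. f (q*L+k) - real (blk m L q))"
    unfolding tot by (simp add: sum_subtractf sum_distrib_left)
  also have "\<dots> \<le> (\<Sum>q<Q. \<Sum>k<L. 2 * W q)"
    using each by (intro sum_mono) auto
  also have "\<dots> = 2 * real L * (\<Sum>q<Q. W q)" by (simp add: sum_distrib_left mult.assoc mult.left_commute)
  also have "(\<Sum>q<Q. W q) = (\<Sum>n<Q*L. \<bar>f (n+1) - f n\<bar>)"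
    unfolding W_def using sum_blocks[of "\<lambda>n. \<bar>f (n+1) - f n\<bar>" Q L] by (simp add: add.assoc)
  also have "\<dots> \<le> 2 * f (m div 2)" unfolding f_def by (rule tv_binom)
  finally have "real (2^m) - real L * (\<Sum>q<Q. real (blk m L q)) \<le> 2 * real L * (2 * f (m div 2))"
    by (simp add: mult_left_mono)
  then show ?thesis unfolding Q_def f_def by simp
qed


theorem mainTheorem5:
  fixes \<delta> :: real and L K :: nat
  assumes "\<delta> \<noteq> 0" and "L > 0" and "K > L"
  shows "\<forall>\<epsilon>>0. \<exists>m::nat. \<exists>\<Phi>.
           covariant_channel (ham_pow (H_T \<delta>) m) (H_T' \<delta> K) \<Phi> \<and>
           trace_norm (\<Phi> (tensor_pow (proj plus_state) m) - proj (eta_state K L)) \<le> \<epsilon>"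
proof (intro allI impI)
  fix \<epsilon> :: real assume eps: "\<epsilon> > 0"
  have L: "L > 0" using assms(2) .
  have KL: "L \<le> K" using assms(3) by simp
  obtain N :: nat where N: "(8 * real L / \<epsilon>)^2 \<le> real N" using real_arch_simple by blast
  define m where "m = 2*N"
  define n' where "n' = 2*K+1"
  have KLn: "K + L \<le> n'" unfolding n'_def using KL by simp
  define \<Phi> where "\<Phi> = skraus n' (JJ m L) (gg m L K) (cc L K)"
  define \<rho> where "\<rho> = tensor_pow (proj plus_state) m"
  have gb: "\<forall>j\<in>JJ m L. \<forall>a<n'. gg m L K j a < 2^m" using gg_bound by blast
  have comp: "\<forall>x<2^m. (\<Sum>j\<in>JJ m L. \<Sum>a<n'. if gg m L K j a = x then cc L K j a * cnj (cc L K j a) else 0) = 1"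
    unfolding n'_def using comp_JJ[OF L KL] by blast
  have covch: "covariant_channel (ham_pow (H_T \<delta>) m) (H_T' \<delta> K) \<Phi>"
    unfolding \<Phi>_def
  proof (rule skraus_covariant_channel[where d = "2^m" and E = "\<lambda>x. \<delta> * real (bc m x)" and E' = "\<lambda>a. (real a - real K) * \<delta>"])
    show "finite (JJ m L)" by simp
    show "\<forall>j\<in>JJ m L. \<forall>a<n'. gg m L K j a < 2^m" by (rule gb)
    show "\<forall>x<2^m. (\<Sum>j\<in>JJ m L. \<Sum>a<n'. if gg m L K j a = x then cc L K j a * cnj (cc L K j a) else 0) = 1" by (rule comp)
    show "dim_row (ham_pow (H_T \<delta>) m) = 2^m" using ham_pow_dim by blast
    show "dim_row (H_T' \<delta> K) = n'" unfolding n'_def by (rule H_T'_props(1))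
    show "\<forall>x<2^m. ham_pow (H_T \<delta>) m $$ (x,x) = complex_of_real (\<delta> * real (bc m x))"
      using ham_pow_diag by blast
    show "\<forall>a<n'. H_T' \<delta> K $$ (a,a) = complex_of_real ((real a - real K) * \<delta>)"
      unfolding n'_def using H_T'_props(2) by blast
    show "\<forall>j\<in>JJ m L. \<forall>a<n'. \<forall>b<n'. cc L K j a \<noteq> 0 \<longrightarrow> cc L K j b \<noteq> 0 \<longrightarrow>
        \<delta> * real (bc m (gg m L K j a)) - \<delta> * real (bc m (gg m L K j b)) = (real a - real K) * \<delta> - (real b - real K) * \<delta>"
      using cov_JJ by blast
  qed
  have rhoC: "\<rho> \<in> carrier_mat (2^m) (2^m)" and rhoE: "\<And>x y. x < 2^m \<Longrightarrow> y < 2^m \<Longrightarrow> \<rho> $$ (x,y) = (1/2)^m"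
    unfolding \<rho>_def using tensor_pow_plus[of m] by auto
  define cT where "cT = card (Tset m L)"
  define cU where "cU = card (Uset m L)"
  define inB where "inB a \<longleftrightarrow> K \<le> a \<and> a < K + L" for a
  have PhiE: "\<Phi> \<rho> $$ (a,b) = complex_of_real ((1/2)^m * (if inB a \<and> inB b then real cT + (if a = b then real cU / real L else 0) else 0))"
    if ab: "a < n'" "b < n'" for a b
  proof -
    have "\<Phi> \<rho> $$ (a,b) = (\<Sum>j\<in>JJ m L. cc L K j a * cnj (cc L K j b) * (1/2)^m)"
      unfolding \<Phi>_def skraus_entry[OF ab]
      using gb ab by (intro sum.cong refl) (simp add: rhoE)
    also have "\<dots> = (\<Sum>j\<in>JJ m L. cc L K j a * cnj (cc L K j b)) * (1/2)^m"
      by (simp add: sum_distrib_right)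
    also have "\<dots> = (if inB a \<and> inB b then of_nat cT + (if a = b then of_nat cU / of_nat L else 0) else 0) * (1/2)^m"
      using out_JJ[OF ab[unfolded n'_def], where m=m and L=L] unfolding cT_def cU_def inB_def by simp
    also have "\<dots> = complex_of_real ((1/2)^m * (if inB a \<and> inB b then real cT + (if a = b then real cU / real L else 0) else 0))"
      by (simp add: mult.commute)
    finally show ?thesis .
  qed
  have rel: "real L * real cT + real cU = 2^m"
  proof -
    have tp: "tr (\<Phi> \<rho>) = tr \<rho>"
      using skraus_tp[OF finite_JJ gb comp] rhoC unfolding \<Phi>_def trace_preserving_def by blast
    have "tr \<rho> = (\<Sum>x<(2::nat)^m. (1/2::complex)^m)" unfolding tr_def using rhoC rhoE by (intro sum.cong) auto
    also have "\<dots> = 1" by (simp add: power_mult_distrib[symmetric])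
    finally have t1: "tr \<rho> = 1" .
    have "tr (\<Phi> \<rho>) = (\<Sum>a<n'. if inB a then complex_of_real ((1/2)^m * (real cT + real cU / real L)) else 0)"
      unfolding tr_def \<Phi>_def by (intro sum.cong refl) (auto simp: PhiE[unfolded \<Phi>_def])
    also have "\<dots> = (\<Sum>a\<in>{K..<K+L}. complex_of_real ((1/2)^m * (real cT + real cU / real L)))"
      unfolding inB_def by (rule sum_restrict_block[OF KLn])
    also have "\<dots> = complex_of_real (real L * ((1/2)^m * (real cT + real cU / real L)))" by simp
    finally have "complex_of_real (real L * ((1/2)^m * (real cT + real cU / real L))) = 1" using tp t1 by simp
    then have h: "real L * ((1/2)^m * (real cT + real cU / real L)) = 1" using of_real_eq_1_iff by blast
    have "real L * (real cT + real cU / real L) = 2^m"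
    proof -
      have "real L * (real cT + real cU / real L) = (real L * ((1/2)^m * (real cT + real cU / real L))) * 2^m"
        by (simp add: power_divide)
      then show ?thesis using h by simp
    qed
    moreover have "real L * (real cT + real cU / real L) = real L * real cT + real cU" using L by (simp add: field_simps)
    ultimately show ?thesis by simp
  qed
  define u where "u = real cU / 2^m"
  have u0: "u \<ge> 0" unfolding u_def by simp
  have D: "\<Phi> \<rho> - proj (eta_state K L) = bm n' K L (complex_of_real (u / real L)) (complex_of_real (- u / real L))"
  proof (rule eq_matI)
    fix a b assume "a < dim_row (bm n' K L (complex_of_real (u / real L)) (complex_of_real (- u / real L)))"
      "b < dim_col (bm n' K L (complex_of_real (u / real L)) (complex_of_real (- u / real L)))"
    then have ab: "a < n'" "b < n'" by auto
    have pe: "proj (eta_state K L) $$ (a,b) = (if inB a \<and> inB b then complex_of_real (1 / real L) else 0)"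
      using eta_proj(2)[of a K b L] ab L unfolding n'_def inB_def by simp
    have r: "(1/2)^m * (real cT + (if a = b then real cU / real L else 0)) - 1 / real L =
        (if a = b then u / real L else 0) + - u / real L"
    proof -
      have "real cT = (2^m - real cU) / real L" using rel L by (simp add: field_simps)
      then show ?thesis unfolding u_def using L by (simp add: field_simps power_divide)
    qed
    have "(\<Phi> \<rho> - proj (eta_state K L)) $$ (a,b) = \<Phi> \<rho> $$ (a,b) - proj (eta_state K L) $$ (a,b)"
      using ab eta_proj(1)[of K L] unfolding n'_def by simp
    also have "\<dots> = bm n' K L (complex_of_real (u / real L)) (complex_of_real (- u / real L)) $$ (a,b)"
    proof (cases "inB a \<and> inB b")
      case True
      have "\<Phi> \<rho> $$ (a,b) - proj (eta_state K L) $$ (a,b) =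
          complex_of_real ((1/2)^m * (real cT + (if a = b then real cU / real L else 0)) - 1 / real L)"
        unfolding PhiE[OF ab] pe using True by simp
      also have "\<dots> = complex_of_real ((if a = b then u / real L else 0) + - u / real L)" unfolding r ..
      also have "\<dots> = bm n' K L (complex_of_real (u / real L)) (complex_of_real (- u / real L)) $$ (a,b)"
        using True ab unfolding inB_def by (simp add: bm_entry)
      finally show ?thesis .
    next
      case False
      then show ?thesis unfolding PhiE[OF ab] pe using ab unfolding inB_def by (auto simp: bm_entry)
    qed
    finally show "(\<Phi> \<rho> - proj (eta_state K L)) $$ (a,b) = bm n' K L (complex_of_real (u / real L)) (complex_of_real (- u / real L)) $$ (a,b)" .
  qed (use eta_proj(1)[of K L] in \<open>auto simp: n'_def\<close>)
  have tn: "trace_norm (\<Phi> \<rho> - proj (eta_state K L)) \<le> 2 * u"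
  proof (cases "L = 1")
    case True
    have D0: "\<Phi> \<rho> - proj (eta_state K L) = bm n' K L (complex_of_real 0) (complex_of_real 0)"
    proof -
      have "bm n' K L (complex_of_real (u / real L)) (complex_of_real (- u / real L)) = bm n' K L (complex_of_real 0) (complex_of_real 0)"
        unfolding True by (subst bm_L1) simp
      then show ?thesis using D by simp
    qed
    have "trace_norm (\<Phi> \<rho> - proj (eta_state K L)) = Re (tr (bm n' K L (complex_of_real 0) (complex_of_real 0)))"
    proof (rule trace_norm_eqI[OF _ bm_carrier])
      show "\<Phi> \<rho> - proj (eta_state K L) \<in> carrier_mat n' n'" unfolding D0 by simp
      show "psd (bm n' K L (complex_of_real 0) (complex_of_real 0))" using bm_psd[OF KLn order_refl order_refl] .
      show "bm n' K L (complex_of_real 0) (complex_of_real 0) * bm n' K L (complex_of_real 0) (complex_of_real 0) =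
          adj (\<Phi> \<rho> - proj (eta_state K L)) * (\<Phi> \<rho> - proj (eta_state K L))"
        unfolding D0 bm_adj by simp
    qed
    also have "\<dots> = 0" using bm_tr[OF KLn] by simp
    finally show ?thesis using u0 by simp
  next
    case False
    then have L2: "L \<ge> 2" using L by simp
    define x where "x = u / real L"
    define y where "y = x * ((real L - 2) / real L)"
    have x0: "x \<ge> 0" unfolding x_def using u0 by simp
    have y0: "y \<ge> 0" unfolding y_def using x0 L2 by simp
    have Dx: "\<Phi> \<rho> - proj (eta_state K L) = bm n' K L (complex_of_real x) (complex_of_real (- x))"
      unfolding D x_def by simp
    have ry: "2 * x * y + real L * y * y = (real L - 2) * (x * x)"
      unfolding y_def using L by (simp add: field_simps power2_eq_square)
    have SS: "bm n' K L (complex_of_real x) (complex_of_real y) * bm n' K L (complex_of_real x) (complex_of_real y) =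
        adj (\<Phi> \<rho> - proj (eta_state K L)) * (\<Phi> \<rho> - proj (eta_state K L))"
    proof -
      have "bm n' K L (complex_of_real x) (complex_of_real y) * bm n' K L (complex_of_real x) (complex_of_real y)
          = bm n' K L (complex_of_real (x*x)) (complex_of_real (2 * x * y + real L * y * y))"
        unfolding bm_mult[OF KLn] by (simp add: algebra_simps)
      also have "\<dots> = bm n' K L (complex_of_real (x*x)) (complex_of_real ((real L - 2) * (x * x)))" unfolding ry ..
      also have "\<dots> = bm n' K L (complex_of_real x) (complex_of_real (- x)) * bm n' K L (complex_of_real x) (complex_of_real (- x))"
        unfolding bm_mult[OF KLn] by (simp add: algebra_simps)
      also have "\<dots> = adj (\<Phi> \<rho> - proj (eta_state K L)) * (\<Phi> \<rho> - proj (eta_state K L))"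
        unfolding Dx bm_adj by simp
      finally show ?thesis .
    qed
    have "trace_norm (\<Phi> \<rho> - proj (eta_state K L)) = Re (tr (bm n' K L (complex_of_real x) (complex_of_real y)))"
      by (rule trace_norm_eqI[OF _ bm_carrier bm_psd[OF KLn x0 y0] SS]) (simp add: Dx)
    also have "\<dots> = real L * (x + y)" using bm_tr[OF KLn] by simp
    also have "\<dots> \<le> 2 * u"
    proof -
      have "x * (real L - 2) \<le> x * real L" using x0 by (intro mult_left_mono) auto
      then have "y \<le> x" unfolding y_def using x0 L by (simp add: divide_le_eq)
      then have "real L * (x + y) \<le> real L * (2 * x)" by (intro mult_left_mono) auto
      also have "\<dots> = 2 * u" unfolding x_def using L by simp
      finally show ?thesis .
    qed
    finally show ?thesis .
  qed
  have ubound: "2 * u \<le> \<epsilon>"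
  proof -
    have cTs: "real cT = (\<Sum>q<m div L + 1. real (blk m L q))"
      unfolding cT_def Tset_def by (simp add: card_SigmaI of_nat_sum)
    have "real cU \<le> 4 * real L * real (m choose (m div 2))"
      using U_count_bound[OF L, of m] rel cTs by simp
    moreover have md: "m div 2 = N" unfolding m_def by simp
    ultimately have U1: "real cU \<le> 4 * real L * real ((2*N) choose N)" unfolding m_def by simp
    define C where "C = real ((2*N) choose N)"
    have CB: "C^2 * (2*N+1) \<le> 16^N" unfolding C_def by (rule central_binom_bound)
    have sq: "C * sqrt (2*N+1) \<le> 4^N"
    proof -
      have "(C * sqrt (2*N+1))^2 = C^2 * (2*N+1)" by (simp add: power_mult_distrib)
      also have "\<dots> \<le> 16^N" by (rule CB)
      also have "\<dots> = (4^N)^2" by (simp add: power2_eq_square power_mult_distrib[symmetric])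
      finally have "(C * sqrt (2*N+1))^2 \<le> (4^N)^2" .
      then show ?thesis by (rule power2_le_imp_le) simp
    qed
    have pm: "(2::real)^m = 4^N" unfolding m_def by (simp add: power_mult)
    have sp: "sqrt (2*N+1) > 0" by simp
    have "2 * u * sqrt (2*N+1) \<le> 8 * real L"
    proof -
      have "2 * u * sqrt (2*N+1) = 2 * real cU * sqrt (2*N+1) / 4^N" unfolding u_def pm by simp
      also have "\<dots> \<le> 2 * (4 * real L * C) * sqrt (2*N+1) / 4^N"
        using U1 unfolding C_def by (intro divide_right_mono mult_right_mono mult_left_mono) auto
      also have "\<dots> = 8 * real L * (C * sqrt (2*N+1)) / 4^N" by (simp add: algebra_simps)
      also have "\<dots> \<le> 8 * real L * 4^N / 4^N"
        using sq by (intro divide_right_mono mult_left_mono) auto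
      also have "\<dots> = 8 * real L" by simp
      finally show ?thesis .
    qed
    moreover have "8 * real L \<le> \<epsilon> * sqrt (2*N+1)"
    proof -
      have "8 * real L / \<epsilon> \<le> sqrt (real N)" using N by (simp add: real_le_rsqrt)
      also have "\<dots> \<le> sqrt (2*N+1)" by simp
      finally show ?thesis using eps by (simp add: divide_le_eq mult.commute)
    qed
    ultimately have "2 * u * sqrt (2*N+1) \<le> \<epsilon> * sqrt (2*N+1)" by linarith
    then show ?thesis using sp by simp
  qed
  show "\<exists>m::nat. \<exists>\<Phi>. covariant_channel (ham_pow (H_T \<delta>) m) (H_T' \<delta> K) \<Phi> \<and>
           trace_norm (\<Phi> (tensor_pow (proj plus_state) m) - proj (eta_state K L)) \<le> \<epsilon>"
    using covch tn ubound unfolding \<rho>_def by force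
qed

end
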